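(* Let $\Gamma$ be a countable amenable group. Then the action $\Gamma\curvearrowright\beta\Gamma$ has dynamical comparison. Consequently, for any two subsets $A,B$ of $\Gamma$ such that $\mu(A)<\mu(B)$ for every $\Gamma$-invariant finitely additive probability measure $\mu$ on $\Gamma$, there exist $A_1,\dots,A_n\subseteq\Gamma$ and $\gamma_1,\dots,\gamma_n\in\Gamma$ with $A=\bigsqcup_{i=1}^nA_i$ and $\bigsqcup_{i=1}^n\gamma_iA_i\subseteq B$.
   Context: $\beta\Gamma$ is the Stone–Čech compactification of the discrete group $\Gamma$, on which $\Gamma$ acts by extending left translation. For an action $\alpha$ of $\Gamma$ on a compact Hausdorff $0$-dimensional space $X$, dynamical comparison means: for all nonempty clopen $A,B\subseteq X$ with $\mu(A)<\mu(B)$ for every $\alpha$-invariant Radon probability measure $\mu$ on $X$, there exist a clopen partition $A=\bigsqcup_{i=1}^nA_i$ and $\gamma_1,\dots,\gamma_n\in\Gamma$ such that the sets $\alpha(\gamma_i)A_i$ are pairwise disjoint and contained in $B$ (equivalently $[A]\le[B]$ in the clopen type semigroup). In the second statement, the union $\bigsqcup_i \gamma_i A_i$ is a disjoint union. *)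

theory Defs
  imports "HOL-Analysis.Analysis" "HOL-Probability.Probability"
begin

definition borel_sets_of :: "'x topology \<Rightarrow> 'x set set" where
  "borel_sets_of X = sigma_sets (topspace X) (Collect (openin X))"

definition radon_prob :: "'x topology \<Rightarrow> 'x measure \<Rightarrow> bool" where
  "radon_prob X \<mu> \<longleftrightarrow>
     prob_space \<mu> \<and> space \<mu> = topspace X \<and> sets \<mu> = borel_sets_of X \<and>
     (\<forall>E \<in> sets \<mu>. emeasure \<mu> E = (INF U \<in> {U. openin X U \<and> E \<subseteq> U}. emeasure \<mu> U)) \<and>
     (\<forall>U. openin X U \<longrightarrow> emeasure \<mu> U = (SUP K \<in> {K. compactin X K \<and> K \<subseteq> U}. emeasure \<mu> K))"

definition action_invariant :: "('g \<Rightarrow> 'x \<Rightarrow> 'x) \<Rightarrow> 'x measure \<Rightarrow> bool" where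
  "action_invariant \<alpha> \<mu> \<longleftrightarrow>
     (\<forall>g E. E \<in> sets \<mu> \<longrightarrow> emeasure \<mu> (\<alpha> g ` E) = emeasure \<mu> E)"

definition clopenin :: "'x topology \<Rightarrow> 'x set \<Rightarrow> bool" where
  "clopenin X A \<longleftrightarrow> openin X A \<and> closedin X A"

definition dynamical_comparison :: "'x topology \<Rightarrow> ('g \<Rightarrow> 'x \<Rightarrow> 'x) \<Rightarrow> bool" where
  "dynamical_comparison X \<alpha> \<longleftrightarrow>
     (\<forall>A B. clopenin X A \<and> clopenin X B \<and> A \<noteq> {} \<and> B \<noteq> {} \<and>
        (\<forall>\<mu>. radon_prob X \<mu> \<and> action_invariant \<alpha> \<mu> \<longrightarrow> measure \<mu> A < measure \<mu> B) \<longrightarrow>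
        (\<exists>(n::nat) (P::nat \<Rightarrow> 'x set) (\<gamma>::nat \<Rightarrow> 'g).
            A = (\<Union>i<n. P i) \<and>
            (\<forall>i<n. clopenin X (P i)) \<and>
            (\<forall>i<n. \<forall>j<n. i \<noteq> j \<longrightarrow> P i \<inter> P j = {}) \<and>
            (\<forall>i<n. \<alpha> (\<gamma> i) ` P i \<subseteq> B) \<and>
            (\<forall>i<n. \<forall>j<n. i \<noteq> j \<longrightarrow> \<alpha> (\<gamma> i) ` P i \<inter> \<alpha> (\<gamma> j) ` P j = {})))"

text \<open>The group \<Gamma> is the type 'g (class group_add, written additively; not assumed
  commutative). Left translation by g is x \<mapsto> g + x.\<close>

definition fa_inv_prob :: "('g::group_add set \<Rightarrow> real) \<Rightarrow> bool" where
  "fa_inv_prob \<mu> \<longleftrightarrow>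
     \<mu> UNIV = 1 \<and> (\<forall>A. 0 \<le> \<mu> A) \<and>
     (\<forall>A B. A \<inter> B = {} \<longrightarrow> \<mu> (A \<union> B) = \<mu> A + \<mu> B) \<and>
     (\<forall>g A. \<mu> ((\<lambda>x. g + x) ` A) = \<mu> A)"

definition amenable :: "'g::group_add itself \<Rightarrow> bool" where
  "amenable _ \<longleftrightarrow> (\<exists>\<mu>::'g set \<Rightarrow> real. fa_inv_prob \<mu>)"

section \<open>Stone-Cech compactification as the space of ultrafilters\<close>

definition is_ultrafilter_on :: "'g set set \<Rightarrow> bool" where
  "is_ultrafilter_on U \<longleftrightarrow>
     {} \<notin> U \<and> UNIV \<in> U \<and>
     (\<forall>A B. A \<in> U \<and> B \<in> U \<longrightarrow> A \<inter> B \<in> U) \<and>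
     (\<forall>A B. A \<in> U \<and> A \<subseteq> B \<longrightarrow> B \<in> U) \<and>
     (\<forall>A. A \<in> U \<or> - A \<in> U)"

definition beta_space :: "'g set set set" where
  "beta_space = {U. is_ultrafilter_on U}"

definition beta_top :: "'g set set topology" where
  "beta_top = topology_generated_by {{U \<in> beta_space. A \<in> U} | A. True}"

definition beta_action :: "'g::group_add \<Rightarrow> 'g set set \<Rightarrow> 'g set set" where
  "beta_action g U = {(\<lambda>x. g + x) ` A | A. A \<in> U}"

end

theory Submission
  imports Defs
begin

lemma hall_finite:
  fixes N :: "'i \<Rightarrow> 'b set"
  assumes "finite I" "\<forall>i\<in>I. finite (N i)" "\<forall>S\<subseteq>I. card S \<le> card (\<Union>(N ` S))"
  shows "\<exists>\<phi>. inj_on \<phi> I \<and> (\<forall>i\<in>I. \<phi> i \<in> N i)"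
  using assms
proof (induction "card I" arbitrary: I N rule: less_induct)
  case less
  note fin = less.prems(1) and finN = less.prems(2) and hall = less.prems(3)
  show ?case
  proof (cases "I = {}")
    case True then show ?thesis by auto
  next
    case nonempty: False
    show ?thesis
    proof (cases "\<exists>S. S \<subseteq> I \<and> S \<noteq> {} \<and> S \<noteq> I \<and> card (\<Union>(N`S)) = card S")
      case True
      then obtain S where S: "S \<subseteq> I" "S \<noteq> {}" "S \<noteq> I" "card (\<Union>(N`S)) = card S" by blast
      have finS: "finite S" using S(1) fin finite_subset by blast
      have "card S < card I" using S fin by (meson psubsetI psubset_card_mono)
      moreover have "\<forall>i\<in>S. finite (N i)" using finN S(1) by auto
      moreover have "\<forall>T\<subseteq>S. card T \<le> card (\<Union>(N`T))" using hall S(1) by auto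
      ultimately obtain \<phi>1 where p1: "inj_on \<phi>1 S" "\<forall>i\<in>S. \<phi>1 i \<in> N i"
        using less.hyps[of S N] finS by blast
      define X where "X = \<Union>(N`S)"
      have finX: "finite X" unfolding X_def using finS finN S(1) by auto
      define N2 where "N2 = (\<lambda>i. N i - X)"
      have "card S > 0" using finS S(2) by (simp add: card_gt_0_iff)
      then have "card (I - S) < card I" using S(1) finS card_Diff_subset[OF finS S(1)]
        \<open>card S < card I\<close> by linarith
      moreover have "\<forall>T\<subseteq>I - S. card T \<le> card (\<Union>(N2 ` T))"
      proof (intro allI impI)
        fix T assume T: "T \<subseteq> I - S"
        have finT: "finite T" using T fin finite_subset by blast
        have eq: "\<Union>(N2 ` T) = \<Union>(N ` (T \<union> S)) - X" unfolding N2_def X_def by auto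
        have finU: "finite (\<Union>(N ` (T \<union> S)))" using finT finS finN T S(1) by auto
        have XU: "X \<subseteq> \<Union>(N ` (T \<union> S))" unfolding X_def by auto
        have "T \<union> S \<subseteq> I" using T S(1) by auto
        then have "card (T \<union> S) \<le> card (\<Union>(N ` (T \<union> S)))" using hall by blast
        moreover have "card (T \<union> S) = card T + card S" using T finT finS by (subst card_Un_disjoint) auto
        moreover have "card (\<Union>(N ` (T \<union> S)) - X) = card (\<Union>(N ` (T \<union> S))) - card X"
          using XU finU by (simp add: card_Diff_subset finX)
        ultimately have "card T \<le> card (\<Union>(N ` (T \<union> S)) - X)" using S(4) unfolding X_def by linarith
        then show "card T \<le> card (\<Union>(N2 ` T))" using eq by simp
      qed
      moreover have "\<forall>i\<in>I - S. finite (N2 i)" using finN unfolding N2_def by auto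
      ultimately obtain \<phi>2 where p2: "inj_on \<phi>2 (I - S)" "\<forall>i\<in>I - S. \<phi>2 i \<in> N2 i"
        using less.hyps[of "I - S" N2] fin by auto
      define \<phi> where "\<phi> = (\<lambda>i. if i \<in> S then \<phi>1 i else \<phi>2 i)"
      have "inj_on \<phi> I"
      proof (rule inj_onI)
        fix i j assume ij: "i \<in> I" "j \<in> I" "\<phi> i = \<phi> j"
        show "i = j"
        proof (cases "i \<in> S"; cases "j \<in> S")
          assume "i \<in> S" "j \<in> S" then show ?thesis using ij p1 unfolding \<phi>_def by (auto dest: inj_onD)
        next
          assume "i \<notin> S" "j \<notin> S" then show ?thesis using ij p2 unfolding \<phi>_def by (auto dest: inj_onD)
        next
          assume a: "i \<in> S" "j \<notin> S"
          then have "\<phi> i \<in> X" using p1 unfolding \<phi>_def X_def by auto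
          moreover have "\<phi> j \<notin> X" using a ij p2 unfolding \<phi>_def N2_def by auto
          ultimately show ?thesis using ij by auto
        next
          assume a: "i \<notin> S" "j \<in> S"
          then have "\<phi> j \<in> X" using p1 unfolding \<phi>_def X_def by auto
          moreover have "\<phi> i \<notin> X" using a ij p2 unfolding \<phi>_def N2_def by force
          ultimately show ?thesis using ij by auto
        qed
      qed
      moreover have "\<forall>i\<in>I. \<phi> i \<in> N i" using p1 p2 unfolding \<phi>_def N2_def by auto
      ultimately show ?thesis by blast
    next
      case False
      then have strict: "\<And>S. S \<subseteq> I \<Longrightarrow> S \<noteq> {} \<Longrightarrow> S \<noteq> I \<Longrightarrow> card S < card (\<Union>(N`S))"
        using hall by (metis le_neq_implies_less)
      obtain i0 where i0: "i0 \<in> I" using nonempty by blast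
      have "card {i0} \<le> card (N i0)" using hall i0 by (metis ccpo_Sup_singleton empty_subsetI
            image_empty image_insert insert_subset)
      then have "N i0 \<noteq> {}" by auto
      then obtain b where b: "b \<in> N i0" by blast
      define N' where "N' = (\<lambda>i. N i - {b})"
      have c1: "card (I - {i0}) = card I - 1" using i0 fin by (simp add: card_Diff_singleton)
      have c2: "card I > 0" using fin i0 card_gt_0_iff by blast
      have "card (I - {i0}) < card I" using c1 c2 by linarith
      moreover have "\<forall>T\<subseteq>I - {i0}. card T \<le> card (\<Union>(N' ` T))"
      proof (intro allI impI)
        fix T assume T: "T \<subseteq> I - {i0}"
        show "card T \<le> card (\<Union>(N' ` T))"
        proof (cases "T = {}")
          case True then show ?thesis by simp
        next
          case False
          have finT: "finite T" using T fin finite_subset by blast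
          have "card T < card (\<Union>(N`T))" using strict[of T] T False i0 by auto
          moreover have "\<Union>(N' ` T) = \<Union>(N`T) - {b}" unfolding N'_def by auto
          moreover have "card (\<Union>(N`T) - {b}) \<ge> card (\<Union>(N`T)) - 1"
            using diff_card_le_card_Diff[of "{b}" "\<Union>(N`T)"] by simp
          ultimately have "card T \<le> card (\<Union>(N`T) - {b})" by linarith
          then show ?thesis using \<open>\<Union>(N' ` T) = \<Union>(N`T) - {b}\<close> by simp
        qed
      qed
      moreover have "\<forall>i\<in>I - {i0}. finite (N' i)" using finN unfolding N'_def by auto
      ultimately obtain \<phi>' where p: "inj_on \<phi>' (I - {i0})" "\<forall>i\<in>I - {i0}. \<phi>' i \<in> N' i"
        using less.hyps[of "I - {i0}" N'] fin by auto
      define \<phi> where "\<phi> = \<phi>'(i0 := b)"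
      have "inj_on \<phi> I"
      proof (rule inj_onI)
        fix i j assume ij: "i \<in> I" "j \<in> I" "\<phi> i = \<phi> j"
        show "i = j"
        proof (cases "i = i0"; cases "j = i0")
          assume "i \<noteq> i0" "j \<noteq> i0" then show ?thesis using ij p unfolding \<phi>_def by (auto dest: inj_onD)
        next
          assume "i = i0" "j \<noteq> i0" then show ?thesis using ij p unfolding \<phi>_def N'_def by auto
        next
          assume "i \<noteq> i0" "j = i0" then show ?thesis using ij p unfolding \<phi>_def N'_def by force
        qed simp
      qed
      moreover have "\<forall>i\<in>I. \<phi> i \<in> N i" using p b unfolding \<phi>_def N'_def by auto
      ultimately show ?thesis by blast
    qed
  qed
qed

lemma hall_countable:
  fixes N :: "'i \<Rightarrow> 'b set"
  assumes cI: "countable I" and finN: "\<forall>i\<in>I. finite (N i)"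
    and hall: "\<forall>S\<subseteq>I. finite S \<longrightarrow> card S \<le> card (\<Union>(N ` S))"
  shows "\<exists>\<phi>. inj_on \<phi> I \<and> (\<forall>i\<in>I. \<phi> i \<in> N i)"
proof (cases "I = {}")
  case True then show ?thesis by auto
next
  case False
  define e where "e = from_nat_into I"
  have rng: "range e = I" unfolding e_def using range_from_nat_into[OF False cI] .
  define J where "J = (\<lambda>k. e ` {..<k})"
  have finJ: "finite (J k)" for k unfolding J_def by auto
  have JI: "J k \<subseteq> I" for k unfolding J_def using rng by auto
  have Jmono: "k \<le> k' \<Longrightarrow> J k \<subseteq> J k'" for k k' unfolding J_def by auto
  have JSuc: "J (Suc k) = insert (e k) (J k)" for k unfolding J_def by (auto simp: lessThan_Suc)
  define mt where "mt = (\<lambda>m \<psi>. inj_on \<psi> (J m) \<and> (\<forall>i\<in>J m. \<psi> i \<in> N i))"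
  have mt_ex: "\<exists>\<psi>. mt m \<psi>" for m
    unfolding mt_def
  proof (rule hall_finite)
    show "finite (J m)" by (rule finJ)
    show "\<forall>i\<in>J m. finite (N i)" using JI finN by blast
    show "\<forall>S\<subseteq>J m. card S \<le> card (\<Union>(N ` S))"
    proof (intro allI impI)
      fix S assume "S \<subseteq> J m"
      then show "card S \<le> card (\<Union>(N ` S))" using hall JI[of m] finJ[of m]
        by (meson finite_subset subset_trans)
    qed
  qed
  have mt_mono: "mt m \<psi> \<Longrightarrow> m' \<le> m \<Longrightarrow> mt m' \<psi>" for m m' \<psi>
    unfolding mt_def using Jmono by (meson inj_on_subset subsetD)
  define Q where "Q = (\<lambda>k f. \<forall>m\<ge>k. \<exists>\<psi>. mt m \<psi> \<and> (\<forall>i\<in>J k. \<psi> i = f i))"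
  have step: "\<exists>b. Q (Suc k) (f(e k := b))" if Qk: "Q k f" for k f
  proof (rule ccontr)
    assume "\<not> (\<exists>b. Q (Suc k) (f(e k := b)))"
    then have "\<forall>b. \<exists>m\<ge>Suc k. \<forall>\<psi>. mt m \<psi> \<longrightarrow> \<not> (\<forall>i\<in>J (Suc k). \<psi> i = (f(e k := b)) i)"
      unfolding Q_def by blast
    then obtain mb where mb: "\<And>b. mb b \<ge> Suc k"
      "\<And>b \<psi>. mt (mb b) \<psi> \<Longrightarrow> \<not> (\<forall>i\<in>J (Suc k). \<psi> i = (f(e k := b)) i)"
      by metis
    have ekI: "e k \<in> I" using rng by auto
    define M where "M = Max (insert (Suc k) (mb ` N (e k)))"
    have finM: "finite (insert (Suc k) (mb ` N (e k)))" using finN ekI by auto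
    have M1: "Suc k \<le> M" unfolding M_def using finM by auto
    have M2: "b \<in> N (e k) \<Longrightarrow> mb b \<le> M" for b unfolding M_def using finM by auto
    obtain \<psi> where psi: "mt M \<psi>" "\<forall>i\<in>J k. \<psi> i = f i" using Qk M1 unfolding Q_def by (meson Suc_leD)
    have ekJ: "e k \<in> J M" using M1 unfolding J_def by auto
    define b where "b = \<psi> (e k)"
    have bN: "b \<in> N (e k)" using psi(1) ekJ unfolding mt_def b_def by auto
    have "mt (mb b) \<psi>" using mt_mono[OF psi(1) M2[OF bN]] .
    moreover have "\<forall>i\<in>J (Suc k). \<psi> i = (f(e k := b)) i"
      using psi(2) unfolding JSuc b_def by auto
    ultimately show False using mb(2) by blast
  qed
  define fs where "fs = rec_nat (\<lambda>x. undefined) (\<lambda>k f. if e k \<in> J k then f else f(e k := (SOME b. Q (Suc k) (f(e k := b)))))"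
  have fs0: "fs 0 = (\<lambda>x. undefined)" unfolding fs_def by simp
  have fsS: "fs (Suc k) = (if e k \<in> J k then fs k else (fs k)(e k := (SOME b. Q (Suc k) ((fs k)(e k := b)))))" for k
    unfolding fs_def by simp
  have Qall: "Q k (fs k)" for k
  proof (induction k)
    case 0
    show ?case unfolding Q_def fs0 using mt_ex by (auto simp: J_def)
  next
    case (Suc k)
    show ?case
    proof (cases "e k \<in> J k")
      case True
      then have "J (Suc k) = J k" using JSuc by auto
      then show ?thesis using Suc True unfolding Q_def fsS by auto
    next
      case False
      then show ?thesis using someI_ex[OF step[OF Suc]] unfolding fsS by (simp only: if_False)
    qed
  qed
  have cons: "k \<le> k' \<Longrightarrow> i \<in> J k \<Longrightarrow> fs k' i = fs k i" for k k' i
  proof (induction k' rule: dec_induct)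
    case base then show ?case by simp
  next
    case (step n)
    have "i \<in> J n" using step(1) step(4) Jmono by auto
    then show ?case using step unfolding fsS by auto
  qed
  have agree: "i \<in> J k \<Longrightarrow> i \<in> J k' \<Longrightarrow> fs k i = fs k' i" for i k k'
    using cons[of k "max k k'" i] cons[of k' "max k k'" i] by auto
  have inJ: "i \<in> I \<Longrightarrow> \<exists>k. i \<in> J k" for i
  proof -
    assume "i \<in> I"
    then obtain n where "e n = i" using rng by auto
    then have "i \<in> J (Suc n)" unfolding J_def by auto
    then show ?thesis by blast
  qed
  define \<phi> where "\<phi> = (\<lambda>i. fs (SOME k. i \<in> J k) i)"
  have phiJ: "i \<in> J k \<Longrightarrow> \<phi> i = fs k i" for i k
    unfolding \<phi>_def by (metis agree someI_ex)
  have mtk: "\<exists>\<psi>. mt k \<psi> \<and> (\<forall>i\<in>J k. \<psi> i = fs k i)" for k using Qall[of k] unfolding Q_def by auto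
  have "inj_on \<phi> I"
  proof (rule inj_onI)
    fix i j assume ij: "i \<in> I" "j \<in> I" "\<phi> i = \<phi> j"
    obtain ki kj where k: "i \<in> J ki" "j \<in> J kj" using inJ ij by blast
    define k where "k = max ki kj"
    have ik: "i \<in> J k" "j \<in> J k" using k Jmono[of ki k] Jmono[of kj k] unfolding k_def by auto
    obtain \<psi> where "mt k \<psi>" "\<forall>i\<in>J k. \<psi> i = fs k i" using mtk by blast
    then show "i = j" using ik ij phiJ unfolding mt_def by (metis inj_onD)
  qed
  moreover have "\<forall>i\<in>I. \<phi> i \<in> N i"
  proof
    fix i assume "i \<in> I"
    then obtain k where k: "i \<in> J k" using inJ by blast
    obtain \<psi> where "mt k \<psi>" "\<forall>i\<in>J k. \<psi> i = fs k i" using mtk by blast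
    then show "\<phi> i \<in> N i" using k phiJ unfolding mt_def by metis
  qed
  ultimately show ?thesis by blast
qed


definition fip :: "'a set set \<Rightarrow> bool" where
  "fip G \<longleftrightarrow> (\<forall>F. F \<subseteq> G \<and> finite F \<longrightarrow> \<Inter>F \<noteq> {})"

lemma fip_insert:
  assumes "fip M" "\<forall>F. F \<subseteq> M \<and> finite F \<longrightarrow> \<Inter>F \<inter> X \<noteq> {}"
  shows "fip (insert X M)"
  unfolding fip_def
proof (intro allI impI)
  fix F assume F: "F \<subseteq> insert X M \<and> finite F"
  show "\<Inter>F \<noteq> {}"
  proof (cases "X \<in> F")
    case True
    have "F - {X} \<subseteq> M" "finite (F - {X})" using F by auto
    then have "\<Inter>(F - {X}) \<inter> X \<noteq> {}" using assms(2) by blast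
    moreover have "\<Inter>F = \<Inter>(F - {X}) \<inter> X" using True by auto
    ultimately show ?thesis by simp
  next
    case False
    then have "F \<subseteq> M" using F by auto
    then show ?thesis using assms(1) F unfolding fip_def by blast
  qed
qed

lemma ultrafilter_exists:
  fixes \<F> :: "'a set set"
  assumes "fip \<F>"
  shows "\<exists>U. is_ultrafilter_on U \<and> \<F> \<subseteq> U"
proof -
  define \<A> where "\<A> = {G. \<F> \<subseteq> G \<and> fip G}"
  have "\<forall>C\<in>chains \<A>. \<exists>U\<in>\<A>. \<forall>X\<in>C. X \<subseteq> U"
  proof
    fix C assume C: "C \<in> chains \<A>"
    show "\<exists>U\<in>\<A>. \<forall>X\<in>C. X \<subseteq> U"
    proof (cases "C = {}")
      case True then show ?thesis using assms unfolding \<A>_def by auto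
    next
      case False
      have "\<Union>C \<in> \<A>"
        unfolding \<A>_def fip_def
      proof (safe)
        fix x assume "x \<in> \<F>"
        then show "x \<in> \<Union>C" using False C unfolding chains_def \<A>_def by blast
      next
        fix F assume F: "F \<subseteq> \<Union>C" "finite F" "\<Inter>F = {}"
        have ch: "subset.chain UNIV C" using C unfolding chains_def chain_subset_alt_def by auto
        obtain B where "B \<in> C" "F \<subseteq> B" using finite_subset_Union_chain[OF F(2) F(1) False ch] by blast
        then have "fip B" using C unfolding chains_def \<A>_def by auto
        then show False using F \<open>F \<subseteq> B\<close> unfolding fip_def by blast
      qed
      then show ?thesis by blast
    qed
  qed
  then obtain M where M: "M \<in> \<A>" "\<forall>X\<in>\<A>. M \<subseteq> X \<longrightarrow> X = M" using Zorn_Lemma2[of \<A>] by blast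
  have fipM: "fip M" and FM: "\<F> \<subseteq> M" using M(1) unfolding \<A>_def by auto
  have add: "X \<in> M" if "\<forall>F. F \<subseteq> M \<and> finite F \<longrightarrow> \<Inter>F \<inter> X \<noteq> {}" for X
  proof -
    have "insert X M \<in> \<A>" using fip_insert[OF fipM that] FM unfolding \<A>_def by auto
    then have "insert X M = M" using M(2) by blast
    then show ?thesis by blast
  qed
  have ne: "\<Inter>F \<noteq> {}" if "F \<subseteq> M" "finite F" for F using fipM that unfolding fip_def by blast
  have "is_ultrafilter_on M"
    unfolding is_ultrafilter_on_def
  proof (intro conjI allI impI)
    show "{} \<notin> M" using ne[of "{{}}"] by auto
    show "UNIV \<in> M" by (rule add) (use ne in auto)
  next
    fix A B assume AB: "A \<in> M \<and> B \<in> M"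
    show "A \<inter> B \<in> M"
    proof (rule add, intro allI impI)
      fix F assume F: "F \<subseteq> M \<and> finite F"
      have "\<Inter>(insert A (insert B F)) \<noteq> {}" using ne[of "insert A (insert B F)"] F AB by auto
      then show "\<Inter>F \<inter> (A \<inter> B) \<noteq> {}" by auto
    qed
  next
    fix A B assume AB: "A \<in> M \<and> A \<subseteq> B"
    show "B \<in> M"
    proof (rule add, intro allI impI)
      fix F assume F: "F \<subseteq> M \<and> finite F"
      have "\<Inter>(insert A F) \<noteq> {}" using ne[of "insert A F"] F AB by auto
      then show "\<Inter>F \<inter> B \<noteq> {}" using AB by auto
    qed
  next
    fix A
    show "A \<in> M \<or> - A \<in> M"
    proof (rule ccontr)
      assume "\<not> (A \<in> M \<or> - A \<in> M)"
      then obtain F1 F2 where F: "F1 \<subseteq> M" "finite F1" "\<Inter>F1 \<inter> A = {}"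
        "F2 \<subseteq> M" "finite F2" "\<Inter>F2 \<inter> - A = {}"
        using add[of A] add[of "-A"] by blast
      have "\<Inter>(F1 \<union> F2) \<noteq> {}" using ne[of "F1 \<union> F2"] F by auto
      moreover have "\<Inter>(F1 \<union> F2) = {}" using F(3) F(6) by auto
      ultimately show False by simp
    qed
  qed
  then show ?thesis using FM by blast
qed

lemma ultra_int_iff:
  assumes U: "is_ultrafilter_on U"
  shows "A \<inter> B \<in> U \<longleftrightarrow> A \<in> U \<and> B \<in> U"
  using U unfolding is_ultrafilter_on_def by blast

lemma ultra_compl_iff:
  assumes U: "is_ultrafilter_on U"
  shows "- A \<in> U \<longleftrightarrow> A \<notin> U"
proof
  assume "- A \<in> U"
  then show "A \<notin> U" using U ultra_int_iff[OF U, of A "-A"] unfolding is_ultrafilter_on_def by auto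
next
  assume "A \<notin> U" then show "- A \<in> U" using U unfolding is_ultrafilter_on_def by blast
qed

lemma ultra_finite_union:
  assumes U: "is_ultrafilter_on U" and fin: "finite I" and mem: "(\<Union>i\<in>I. P i) \<in> U"
  shows "\<exists>i\<in>I. P i \<in> U"
  using fin mem
proof (induction I rule: finite_induct)
  case empty then show ?case using U unfolding is_ultrafilter_on_def by auto
next
  case (insert j I)
  show ?case
  proof (cases "P j \<in> U")
    case True then show ?thesis by auto
  next
    case False
    then have "- P j \<in> U" using U unfolding is_ultrafilter_on_def by blast
    then have "- P j \<inter> (\<Union>i\<in>insert j I. P i) \<in> U" using insert.prems ultra_int_iff[OF U] by blast
    moreover have "- P j \<inter> (\<Union>i\<in>insert j I. P i) \<subseteq> (\<Union>i\<in>I. P i)" by auto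
    ultimately have "(\<Union>i\<in>I. P i) \<in> U" using U unfolding is_ultrafilter_on_def by metis
    then show ?thesis using insert.IH by auto
  qed
qed

lemma ultra_union_iff:
  assumes U: "is_ultrafilter_on U"
  shows "A \<union> B \<in> U \<longleftrightarrow> A \<in> U \<or> B \<in> U"
proof
  assume AB: "A \<union> B \<in> U"
  show "A \<in> U \<or> B \<in> U"
  proof (rule ccontr)
    assume "\<not> (A \<in> U \<or> B \<in> U)"
    then have "- A \<in> U" "- B \<in> U" using ultra_compl_iff[OF U] by auto
    then have "(A \<union> B) \<inter> (- A \<inter> - B) \<in> U" using AB ultra_int_iff[OF U] by blast
    moreover have "(A \<union> B) \<inter> (- A \<inter> - B) = {}" by auto
    ultimately show False using U unfolding is_ultrafilter_on_def by auto
  qed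
next
  assume "A \<in> U \<or> B \<in> U"
  then show "A \<union> B \<in> U" using U unfolding is_ultrafilter_on_def by blast
qed

lemma free_ultrafilter_nat:
  "\<exists>U :: nat set set. is_ultrafilter_on U \<and> (\<forall>N. {n. N \<le> n} \<in> U)"
proof -
  have "fip {S :: nat set. finite (- S)}"
    unfolding fip_def
  proof (intro allI impI)
    fix F :: "nat set set" assume F: "F \<subseteq> {S. finite (- S)} \<and> finite F"
    have "- \<Inter>F = \<Union>(uminus ` F)" by auto
    moreover have "finite (\<Union>(uminus ` F))" using F by auto
    ultimately have "finite (- \<Inter>F)" by simp
    then show "\<Inter>F \<noteq> {}" by auto
  qed
  then obtain U where U: "is_ultrafilter_on U" "{S :: nat set. finite (- S)} \<subseteq> U"
    using ultrafilter_exists by blast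
  have "finite (- {n. N \<le> n})" for N :: nat
  proof -
    have "- {n. N \<le> n} = {..<N}" by auto
    then show ?thesis by simp
  qed
  then show ?thesis using U by blast
qed

definition ufil :: "nat set set \<Rightarrow> nat filter" where
  "ufil U = Abs_filter (\<lambda>P. {n. P n} \<in> U)"

lemma eventually_ufil:
  assumes "is_ultrafilter_on U"
  shows "eventually P (ufil U) \<longleftrightarrow> {n. P n} \<in> U"
proof -
  have "is_filter (\<lambda>P. {n. P n} \<in> U)"
  proof
    show "{n. True} \<in> U" using assms unfolding is_ultrafilter_on_def by simp
  next
    fix P Q assume "{n. P n} \<in> U" "{n. Q n} \<in> U"
    then have "{n. P n} \<inter> {n. Q n} \<in> U" using assms unfolding is_ultrafilter_on_def by blast
    moreover have "{n. P n} \<inter> {n. Q n} = {n. P n \<and> Q n}" by auto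
    ultimately show "{n. P n \<and> Q n} \<in> U" by simp
  next
    fix P Q assume "\<forall>x. P x \<longrightarrow> Q x" "{n. P n} \<in> U"
    moreover have "{n. P n} \<subseteq> {n. Q n}" using calculation by auto
    ultimately show "{n. Q n} \<in> U" using assms unfolding is_ultrafilter_on_def by blast
  qed
  then show ?thesis unfolding ufil_def eventually_def by (simp add: Abs_filter_inverse)
qed

lemma ufil_ultra:
  assumes "is_ultrafilter_on U"
  shows "eventually P (ufil U) \<or> eventually (\<lambda>n. \<not> P n) (ufil U)"
proof -
  have "{n. P n} \<in> U \<or> - {n. P n} \<in> U" using assms unfolding is_ultrafilter_on_def by blast
  moreover have "- {n. P n} = {n. \<not> P n}" by auto
  ultimately show ?thesis using eventually_ufil[OF assms] by auto
qed

lemma ufil_not_bot: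
  assumes "is_ultrafilter_on U"
  shows "ufil U \<noteq> bot"
proof
  assume "ufil U = bot"
  then have "eventually (\<lambda>n. False) (ufil U)" by simp
  then show False using eventually_ufil[OF assms] assms unfolding is_ultrafilter_on_def by simp
qed

lemma ufil_le_seq:
  assumes "is_ultrafilter_on U" "\<forall>N. {n. N \<le> n} \<in> U"
  shows "ufil U \<le> sequentially"
proof (rule filter_leI)
  fix P assume "eventually P sequentially"
  then obtain N where N: "\<forall>n\<ge>N. P n" unfolding eventually_sequentially by blast
  have "{n. N \<le> n} \<subseteq> {n. P n}" using N by auto
  then have "{n. P n} \<in> U" using assms unfolding is_ultrafilter_on_def by blast
  then show "eventually P (ufil U)" using eventually_ufil[OF assms(1)] by simp
qed

lemma ufil_limit_exists:
  fixes f :: "nat \<Rightarrow> real"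
  assumes U: "is_ultrafilter_on U" and f: "\<And>n. f n \<in> {0..1}"
  shows "\<exists>l. (f \<longlongrightarrow> l) (ufil U)"
proof -
  define G where "G = filtermap f (ufil U)"
  have "G \<noteq> bot" unfolding G_def using ufil_not_bot[OF U] by (simp add: filtermap_bot_iff)
  moreover have "eventually (\<lambda>x. x \<in> {0..1}) G" unfolding G_def eventually_filtermap using f by simp
  ultimately obtain x where x: "inf (nhds x) G \<noteq> bot"
    using compact_Icc[of 0 "1::real"] unfolding compact_filter by blast
  have "(f \<longlongrightarrow> x) (ufil U)"
  proof (rule topological_tendstoI)
    fix S assume S: "open S" "x \<in> S"
    show "eventually (\<lambda>n. f n \<in> S) (ufil U)"
    proof (rule ccontr)
      assume "\<not> eventually (\<lambda>n. f n \<in> S) (ufil U)"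
      then have "eventually (\<lambda>n. f n \<notin> S) (ufil U)" using ufil_ultra[OF U] by blast
      then have "eventually (\<lambda>y. y \<notin> S) G" unfolding G_def eventually_filtermap .
      moreover have "eventually (\<lambda>y. y \<in> S) (nhds x)" using S by (rule eventually_nhds_in_open)
      ultimately have "eventually (\<lambda>y. False) (inf (nhds x) G)"
        unfolding eventually_inf by blast
      then show False using x by (simp add: eventually_False)
    qed
  qed
  then show ?thesis by blast
qed

context
  fixes \<nu> :: "'g::group_add set \<Rightarrow> real"
  assumes fa: "fa_inv_prob \<nu>"
begin

lemma fa_add: "A \<inter> B = {} \<Longrightarrow> \<nu> (A \<union> B) = \<nu> A + \<nu> B"
  using fa unfolding fa_inv_prob_def by simp

lemma fa_nonneg: "0 \<le> \<nu> A"
  using fa unfolding fa_inv_prob_def by simp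

lemma fa_univ: "\<nu> UNIV = 1"
  using fa unfolding fa_inv_prob_def by simp

lemma fa_inv: "\<nu> ((\<lambda>x. g + x) ` A) = \<nu> A"
  using fa unfolding fa_inv_prob_def by simp

lemma fa_empty: "\<nu> {} = 0"
  using fa_add[of "{}" "{}"] by simp

lemma fa_mono: "A \<subseteq> B \<Longrightarrow> \<nu> A \<le> \<nu> B"
proof -
  assume "A \<subseteq> B"
  then have e: "A \<union> (B - A) = B" by auto
  have "\<nu> (A \<union> (B - A)) = \<nu> A + \<nu> (B - A)" using fa_add[of A "B - A"] by auto
  then have "\<nu> B = \<nu> A + \<nu> (B - A)" unfolding e .
  then show ?thesis using fa_nonneg[of "B - A"] by simp
qed

lemma fa_le1: "\<nu> A \<le> 1"
  using fa_mono[of A UNIV] fa_univ by simp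

lemma fa_subadd: "\<nu> (A \<union> B) \<le> \<nu> A + \<nu> B"
proof -
  have e: "A \<union> (B - A) = A \<union> B" by auto
  have "\<nu> (A \<union> (B - A)) = \<nu> A + \<nu> (B - A)" using fa_add[of A "B - A"] by auto
  then have "\<nu> (A \<union> B) = \<nu> A + \<nu> (B - A)" unfolding e .
  then show ?thesis using fa_mono[of "B - A" B] by simp
qed

lemma fa_sum:
  assumes "finite I" "\<forall>i\<in>I. \<forall>j\<in>I. i \<noteq> j \<longrightarrow> P i \<inter> P j = {}"
  shows "\<nu> (\<Union>i\<in>I. P i) = (\<Sum>i\<in>I. \<nu> (P i))"
  using assms
proof (induction I rule: finite_induct)
  case empty then show ?case by (simp add: fa_empty)
next
  case (insert j I)
  have "P j \<inter> P i = {}" if "i \<in> I" for i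
    using insert.prems insert.hyps(2) that by (metis insertCI)
  then have d: "P j \<inter> (\<Union>i\<in>I. P i) = {}" by blast
  have "\<nu> (\<Union>i\<in>insert j I. P i) = \<nu> (P j \<union> (\<Union>i\<in>I. P i))" by simp
  also have "\<dots> = \<nu> (P j) + \<nu> (\<Union>i\<in>I. P i)" using fa_add[OF d] .
  also have "\<nu> (\<Union>i\<in>I. P i) = (\<Sum>i\<in>I. \<nu> (P i))" using insert.IH insert.prems by (meson insertCI)
  finally show ?case using insert.hyps by simp
qed

lemma fa_sum_le:
  assumes "finite I"
  shows "\<nu> (\<Union>i\<in>I. P i) \<le> (\<Sum>i\<in>I. \<nu> (P i))"
  using assms
proof (induction I rule: finite_induct)
  case empty then show ?case by (simp add: fa_empty)
next
  case (insert j I)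
  have "\<nu> (\<Union>i\<in>insert j I. P i) = \<nu> (P j \<union> (\<Union>i\<in>I. P i))" by simp
  also have "\<dots> \<le> \<nu> (P j) + \<nu> (\<Union>i\<in>I. P i)" by (rule fa_subadd)
  also have "\<dots> \<le> \<nu> (P j) + (\<Sum>i\<in>I. \<nu> (P i))" using insert.IH by simp
  finally show ?case using insert.hyps by simp
qed

end


definition sadd :: "'g::group_add set \<Rightarrow> 'g set \<Rightarrow> 'g set" where
  "sadd K F = (\<lambda>p. fst p + snd p) ` (K \<times> F)"

definition rtr :: "'g::group_add set \<Rightarrow> 'g \<Rightarrow> 'g set" where
  "rtr F x = (\<lambda>s. s + x) ` F"

lemma sadd_iff: "y \<in> sadd K F \<longleftrightarrow> (\<exists>k\<in>K. \<exists>f\<in>F. y = k + f)"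
  unfolding sadd_def by force

lemma sadd_finite: "finite K \<Longrightarrow> finite F \<Longrightarrow> finite (sadd K F)"
  unfolding sadd_def by auto

lemma sadd_I: "a \<in> A \<Longrightarrow> b \<in> B \<Longrightarrow> a + b \<in> sadd A B"
  unfolding sadd_def by (rule image_eqI[of _ _ "(a, b)"]) auto

lemma sadd_E:
  assumes "y \<in> sadd A B"
  obtains a b where "a \<in> A" "b \<in> B" "y = a + b"
  using assms unfolding sadd_def by auto

lemma sadd_assoc: "sadd K (sadd L F) = sadd (sadd K L) F"
proof (rule set_eqI)
  fix y
  show "y \<in> sadd K (sadd L F) \<longleftrightarrow> y \<in> sadd (sadd K L) F"
  proof
    assume "y \<in> sadd K (sadd L F)"
    then obtain k z where kz: "k \<in> K" "z \<in> sadd L F" "y = k + z" by (rule sadd_E)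
    then obtain l f where lf: "l \<in> L" "f \<in> F" "z = l + f" by (blast elim: sadd_E)
    have "(k + l) + f \<in> sadd (sadd K L) F" using kz lf by (intro sadd_I) auto
    then show "y \<in> sadd (sadd K L) F" using kz lf by (simp add: add.assoc)
  next
    assume "y \<in> sadd (sadd K L) F"
    then obtain z f where zf: "z \<in> sadd K L" "f \<in> F" "y = z + f" by (rule sadd_E)
    then obtain k l where kl: "k \<in> K" "l \<in> L" "z = k + l" by (blast elim: sadd_E)
    have "k + (l + f) \<in> sadd K (sadd L F)" using kl zf by (intro sadd_I) auto
    then show "y \<in> sadd K (sadd L F)" using kl zf by (simp add: add.assoc)
  qed
qed

lemma sadd_zero: "sadd {0} F = F"
  unfolding sadd_def by force

lemma sadd_mono: "K \<subseteq> K' \<Longrightarrow> sadd K F \<subseteq> sadd K' F"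
  unfolding sadd_iff subset_iff by blast

lemma sadd_ne: "K \<noteq> {} \<Longrightarrow> F \<noteq> {} \<Longrightarrow> sadd K F \<noteq> {}"
  unfolding sadd_def by auto

lemma sadd_sub: "0 \<in> K \<Longrightarrow> F \<subseteq> sadd K F"
proof
  fix f assume "0 \<in> K" "f \<in> F"
  moreover have "f = 0 + f" by simp
  ultimately show "f \<in> sadd K F" unfolding sadd_iff by blast
qed

lemma sadd_lt: "h \<in> K \<Longrightarrow> (\<lambda>s. h + s) ` F \<subseteq> sadd K F"
  using sadd_I by blast

lemma card_rtr: "card (rtr F x) = card F"
  unfolding rtr_def by (rule card_image) (simp add: inj_on_def)

lemma card_lt: "card ((\<lambda>s. (h::'g::group_add) + s) ` F) = card F"
  by (rule card_image) (simp add: inj_on_def)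

lemma folner:
  fixes K :: "'g::group_add set"
  assumes cnt: "countable (UNIV::'g set)" and am: "amenable TYPE('g)" and K: "finite K" and e: "\<epsilon> > 0"
  shows "\<exists>F. finite F \<and> F \<noteq> {} \<and> real (card (sadd K F)) \<le> (1+\<epsilon>) * real (card F)"
proof (rule ccontr)
  assume neg: "\<not> ?thesis"
  obtain \<nu> :: "'g set \<Rightarrow> real" where fa: "fa_inv_prob \<nu>" using am unfolding amenable_def by blast
  define K0 where "K0 = insert 0 K"
  have K0: "finite K0" "0 \<in> K0" using K unfolding K0_def by auto
  have big: "(1+\<epsilon>) * real (card F) < real (card (sadd K0 F))" if "finite F" "F \<noteq> {}" for F
  proof -
    have fin0: "finite (sadd K0 F)" using sadd_finite[OF K0(1) that(1)] .
    have "sadd K F \<subseteq> sadd K0 F" by (rule sadd_mono) (auto simp: K0_def)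
    then have "card (sadd K F) \<le> card (sadd K0 F)" using card_mono[OF fin0] by blast
    then show ?thesis using neg that by force
  qed
  define L where "L m = (sadd K0 ^^ m) {0}" for m
  have LS: "L (Suc m) = sadd K0 (L m)" for m unfolding L_def by simp
  have L0: "L 0 = {0}" unfolding L_def by simp
  have Lfin: "finite (L m)" for m by (induction m) (auto simp: L0 LS sadd_finite K0)
  have Lz: "0 \<in> L m" for m
  proof (induction m)
    case 0 then show ?case by (simp add: L0)
  next
    case (Suc m) then show ?case unfolding LS sadd_iff using K0 by (metis add_0)
  qed
  have grow: "(1+\<epsilon>)^m * real (card F) \<le> real (card (sadd (L m) F))" if "finite F" "F \<noteq> {}" for m F
  proof (induction m)
    case 0 then show ?case by (simp add: L0 sadd_zero)
  next
    case (Suc m)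
    define G where "G = sadd (L m) F"
    have G: "finite G" "G \<noteq> {}" unfolding G_def using sadd_finite[OF Lfin that(1)] sadd_ne[of "L m" F] Lz that by auto
    have "(1+\<epsilon>)^(Suc m) * real (card F) = (1+\<epsilon>) * ((1+\<epsilon>)^m * real (card F))" by simp
    also have "\<dots> \<le> (1+\<epsilon>) * real (card G)" using Suc e unfolding G_def by (intro mult_left_mono) auto
    also have "\<dots> \<le> real (card (sadd K0 G))" using big[OF G] by simp
    also have "sadd K0 G = sadd (L (Suc m)) F" unfolding G_def LS sadd_assoc ..
    finally show ?case .
  qed
  obtain m where m: "2 < (1+\<epsilon>)^m" using real_arch_pow[of "1+\<epsilon>" 2] e by auto
  define Lm where "Lm = L m"
  have two: "2 * card F \<le> card (sadd Lm F)" if "finite F" for F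
  proof (cases "F = {}")
    case True then show ?thesis by simp
  next
    case False
    have "2 * real (card F) \<le> (1+\<epsilon>)^m * real (card F)" using m by (intro mult_right_mono) auto
    also have "\<dots> \<le> real (card (sadd Lm F))" using grow[OF that False] unfolding Lm_def .
    finally show ?thesis by linarith
  qed
  define N where "N = (\<lambda>p::'g \<times> bool. (\<lambda>l. l + fst p) ` Lm)"
  have "countable (UNIV :: ('g \<times> bool) set)"
  proof -
    have "countable ((UNIV::'g set) \<times> (UNIV :: bool set))" using cnt by (intro countable_SIGMA) auto
    then show ?thesis by simp
  qed
  moreover have "\<forall>p\<in>UNIV. finite (N p)" unfolding N_def Lm_def using Lfin by auto
  moreover have "\<forall>S\<subseteq>UNIV. finite S \<longrightarrow> card S \<le> card (\<Union>(N ` S))"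
  proof (intro allI impI)
    fix S :: "('g \<times> bool) set" assume S: "finite S"
    define \<pi> where "\<pi> = fst ` S"
    have fpi: "finite \<pi>" unfolding \<pi>_def using S by auto
    have "S \<subseteq> \<pi> \<times> UNIV" unfolding \<pi>_def by force
    then have "card S \<le> card (\<pi> \<times> (UNIV :: bool set))" using fpi by (intro card_mono) auto
    also have "\<dots> = 2 * card \<pi>" by (simp add: card_cartesian_product)
    also have "\<dots> \<le> card (sadd Lm \<pi>)" using two[OF fpi] .
    also have "sadd Lm \<pi> = \<Union>(N ` S)" unfolding N_def \<pi>_def sadd_iff set_eq_iff by force
    finally show "card S \<le> card (\<Union>(N ` S))" .
  qed
  ultimately obtain \<phi> where phi: "inj_on \<phi> UNIV" "\<forall>p\<in>UNIV. \<phi> p \<in> N p"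
    using hall_countable[of UNIV N] by blast
  define Q where "Q = (\<lambda>l b. {x. \<phi> (x, b) + - x = l})"
  have Qcov: "(\<Union>l\<in>Lm. Q l b) = UNIV" for b
  proof -
    have "\<exists>l\<in>Lm. \<phi> (x, b) + - x = l" for x
    proof -
      obtain l where "l \<in> Lm" "\<phi> (x, b) = l + x" using phi(2) unfolding N_def by auto
      then show ?thesis by (auto simp: add.assoc)
    qed
    then show ?thesis unfolding Q_def by blast
  qed
  have Qsum: "(\<Sum>l\<in>Lm. \<nu> (Q l b)) = 1" for b
  proof -
    have "\<nu> (\<Union>l\<in>Lm. Q l b) = (\<Sum>l\<in>Lm. \<nu> (Q l b))"
      by (rule fa_sum[OF fa]) (auto simp: Q_def Lm_def Lfin)
    then show ?thesis using Qcov fa_univ[OF fa] by simp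
  qed
  define T where "T = (\<lambda>p. (\<lambda>x. fst p + x) ` Q (fst p) (snd p))"
  have Tdisj: "\<forall>p\<in>Lm \<times> (UNIV::bool set). \<forall>q\<in>Lm \<times> (UNIV::bool set). p \<noteq> q \<longrightarrow> T p \<inter> T q = {}"
  proof (intro ballI impI)
    fix p q assume pq: "p \<in> Lm \<times> (UNIV::bool set)" "q \<in> Lm \<times> (UNIV::bool set)" "p \<noteq> q"
    show "T p \<inter> T q = {}"
    proof (rule ccontr)
      assume "T p \<inter> T q \<noteq> {}"
      then obtain x x' where xx: "x \<in> Q (fst p) (snd p)" "x' \<in> Q (fst q) (snd q)" "fst p + x = fst q + x'"
        unfolding T_def by blast
      have "fst p + x = \<phi> (x, snd p)" using xx(1) unfolding Q_def by (auto simp: add.assoc) (metis diff_add_cancel)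
      moreover have "fst q + x' = \<phi> (x', snd q)" using xx(2) unfolding Q_def by (auto simp: add.assoc) (metis diff_add_cancel)
      ultimately have "\<phi> (x, snd p) = \<phi> (x', snd q)" using xx(3) by simp
      then have "(x, snd p) = (x', snd q)" using phi(1) by (meson inj_onD UNIV_I)
      then have "fst p = fst q" "snd p = snd q" using xx(3) by auto
      then show False using pq(3) by (simp add: prod_eq_iff)
    qed
  qed
  have finI: "finite (Lm \<times> (UNIV :: bool set))" unfolding Lm_def using Lfin by auto
  have "\<nu> (\<Union>p\<in>Lm \<times> (UNIV::bool set). T p) = (\<Sum>p\<in>Lm \<times> (UNIV::bool set). \<nu> (T p))"
    by (rule fa_sum[OF fa finI Tdisj])
  also have "\<dots> = (\<Sum>p\<in>Lm \<times> (UNIV::bool set). \<nu> (Q (fst p) (snd p)))"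
    unfolding T_def using fa_inv[OF fa] by simp
  also have "\<dots> = (\<Sum>l\<in>Lm. \<Sum>b\<in>UNIV. \<nu> (Q l b))"
    by (simp add: sum.cartesian_product split_def)
  also have "\<dots> = (\<Sum>l\<in>Lm. \<nu> (Q l True) + \<nu> (Q l False))"
    by (simp add: UNIV_bool add.commute)
  also have "\<dots> = 2" using Qsum[of True] Qsum[of False] by (simp add: sum.distrib)
  finally have "\<nu> (\<Union>p\<in>Lm \<times> (UNIV::bool set). T p) = 2" .
  moreover have "\<nu> (\<Union>p\<in>Lm \<times> (UNIV::bool set). T p) \<le> 1" by (rule fa_le1[OF fa])
  ultimately show False by simp
qed


lemma shift_bound:
  fixes F K E :: "'g::group_add set"
  assumes F: "finite F" and K: "finite K" "0 \<in> K" "- g \<in> K"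
  shows "\<bar>real (card (((\<lambda>y. g + y) ` E) \<inter> rtr F x)) - real (card (E \<inter> rtr F x))\<bar>
           \<le> real (card (sadd K F)) - real (card F)"
proof -
  define F' where "F' = (\<lambda>s. - g + s) ` F"
  have finF': "finite F'" unfolding F'_def using F by auto
  have cF': "card F' = card F" unfolding F'_def by (rule card_lt)
  have a: "card (((\<lambda>y. g + y) ` E) \<inter> rtr F x) = card (E \<inter> rtr F' x)"
  proof -
    have "(\<lambda>y. - g + y) ` (((\<lambda>y. g + y) ` E) \<inter> rtr F x) = E \<inter> rtr F' x"
    proof (rule set_eqI, rule iffI)
      fix z assume "z \<in> (\<lambda>y. - g + y) ` (((\<lambda>y. g + y) ` E) \<inter> rtr F x)"
      then obtain a s where as: "a \<in> E" "s \<in> F" "g + a = s + x" "z = - g + (g + a)"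
        unfolding rtr_def by auto
      have za: "z = a" using as(4) by (simp add: add.assoc[symmetric])
      have "a = - g + s + x" using as(3) by (metis add.assoc add_minus_cancel)
      then have "a \<in> rtr F' x" unfolding rtr_def F'_def using as(2) by auto
      then show "z \<in> E \<inter> rtr F' x" using za as(1) by auto
    next
      fix z assume "z \<in> E \<inter> rtr F' x"
      then obtain s where zs: "z \<in> E" "s \<in> F" "z = - g + s + x" unfolding rtr_def F'_def by auto
      have "g + z = s + x" using zs(3) by (simp add: add.assoc)
      moreover have "g + z \<in> (\<lambda>y. g + y) ` E" using zs(1) by blast
      ultimately have "g + z \<in> ((\<lambda>y. g + y) ` E) \<inter> rtr F x" using zs(2) unfolding rtr_def by auto
      moreover have "z = - g + (g + z)" by (simp add: add.assoc[symmetric])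
      ultimately show "z \<in> (\<lambda>y. - g + y) ` (((\<lambda>y. g + y) ` E) \<inter> rtr F x)" by blast
    qed
    moreover have "inj_on (\<lambda>y. - g + y) X" for X by (simp add: inj_on_def)
    ultimately show ?thesis by (metis card_image)
  qed
  have finR: "finite (rtr G x)" if "finite G" for G using that unfolding rtr_def by auto
  have b: "card (E \<inter> rtr F' x) \<le> card (E \<inter> rtr F x) + card (F' - F)"
  proof -
    have "E \<inter> rtr F' x \<subseteq> (E \<inter> rtr F x) \<union> rtr (F' - F) x" unfolding rtr_def by auto
    then have "card (E \<inter> rtr F' x) \<le> card ((E \<inter> rtr F x) \<union> rtr (F' - F) x)"
      by (intro card_mono) (use finR F finF' in auto)
    also have "\<dots> \<le> card (E \<inter> rtr F x) + card (rtr (F' - F) x)" by (rule card_Un_le)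
    finally show ?thesis by (simp add: card_rtr)
  qed
  have c: "card (E \<inter> rtr F x) \<le> card (E \<inter> rtr F' x) + card (F - F')"
  proof -
    have "E \<inter> rtr F x \<subseteq> (E \<inter> rtr F' x) \<union> rtr (F - F') x" unfolding rtr_def by auto
    then have "card (E \<inter> rtr F x) \<le> card ((E \<inter> rtr F' x) \<union> rtr (F - F') x)"
      by (intro card_mono) (use finR F finF' in auto)
    also have "\<dots> \<le> card (E \<inter> rtr F' x) + card (rtr (F - F') x)" by (rule card_Un_le)
    finally show ?thesis by (simp add: card_rtr)
  qed
  have FK: "F \<subseteq> sadd K F" using sadd_sub[OF K(2)] .
  have F'K: "F' \<subseteq> sadd K F" unfolding F'_def using sadd_lt[OF K(3)] .
  have finS: "finite (sadd K F)" using sadd_finite K(1) F by auto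
  have d: "card (F' - F) \<le> card (sadd K F) - card F"
  proof -
    have "F' - F \<subseteq> sadd K F - F" using F'K by auto
    then have "card (F' - F) \<le> card (sadd K F - F)" using finS by (intro card_mono) auto
    also have "\<dots> = card (sadd K F) - card F" using card_Diff_subset[OF F FK] .
    finally show ?thesis .
  qed
  have e: "card (F - F') = card (F' - F)"
  proof -
    have "card (F - F') = card F - card (F \<inter> F')" using card_Diff_subset_Int finF' F by (simp add: card_Diff_subset_Int)
    moreover have "card (F' - F) = card F' - card (F' \<inter> F)" using card_Diff_subset_Int finF' F by (simp add: card_Diff_subset_Int)
    ultimately show ?thesis using cF' by (simp add: Int_commute)
  qed
  have le: "card F \<le> card (sadd K F)" using card_mono[OF finS FK] .
  have "real (card (F' - F)) \<le> real (card (sadd K F)) - real (card F)" using d le by linarith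
  then show ?thesis using a b c e by linarith
qed

lemma uniform_cond:
  fixes A B :: "'g::group_add set"
  assumes cnt: "countable (UNIV::'g set)" and am: "amenable TYPE('g)"
    and hyp: "\<forall>\<mu>. fa_inv_prob \<mu> \<longrightarrow> \<mu> A < \<mu> B"
  shows "\<exists>F. finite F \<and> F \<noteq> {} \<and> (\<forall>x. card (A \<inter> rtr F x) < card (B \<inter> rtr F x))"
proof (rule ccontr)
  assume neg: "\<not> ?thesis"
  define e where "e = from_nat_into (UNIV::'g set)"
  have esurj: "\<exists>n. e n = g" for g unfolding e_def using from_nat_into_surj[OF cnt] by blast
  define Kn where "Kn n = insert 0 (e ` {..n})" for n
  have Knfin: "finite (Kn n)" for n unfolding Kn_def by auto
  have Kn0: "0 \<in> Kn n" for n unfolding Kn_def by auto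
  have Kne: "m \<le> n \<Longrightarrow> e m \<in> Kn n" for m n unfolding Kn_def by auto
  have "\<forall>n. \<exists>F. finite F \<and> F \<noteq> {} \<and> real (card (sadd (Kn n) F)) \<le> (1 + inverse (real (Suc n))) * real (card F)"
    using folner[OF cnt am Knfin] by simp
  then obtain Fs where Fs: "\<And>n. finite (Fs n)" "\<And>n. Fs n \<noteq> {}"
    "\<And>n. real (card (sadd (Kn n) (Fs n))) \<le> (1 + inverse (real (Suc n))) * real (card (Fs n))"
    by metis
  have "\<forall>n. \<exists>x. card (B \<inter> rtr (Fs n) x) \<le> card (A \<inter> rtr (Fs n) x)"
    using neg Fs(1,2) by (meson not_less)
  then obtain xs where xs: "\<And>n. card (B \<inter> rtr (Fs n) (xs n)) \<le> card (A \<inter> rtr (Fs n) (xs n))"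
    by metis
  define c where "c n E = real (card (E \<inter> rtr (Fs n) (xs n))) / real (card (Fs n))" for n E
  have cpos: "real (card (Fs n)) > 0" for n using Fs(1,2) by (simp add: card_gt_0_iff)
  have finR: "finite (rtr (Fs n) x)" for n x using Fs(1) unfolding rtr_def by auto
  have crange: "c n E \<in> {0..1}" for n E
  proof -
    have "card (E \<inter> rtr (Fs n) (xs n)) \<le> card (rtr (Fs n) (xs n))" using finR by (intro card_mono) auto
    then have "real (card (E \<inter> rtr (Fs n) (xs n))) \<le> real (card (Fs n))" by (simp add: card_rtr)
    then show ?thesis unfolding c_def using cpos[of n] by auto
  qed
  obtain U :: "nat set set" where U: "is_ultrafilter_on U" "\<forall>N. {n. N \<le> n} \<in> U" using free_ultrafilter_nat by blast
  define UF where "UF = ufil U"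
  have UFnb: "UF \<noteq> bot" unfolding UF_def using ufil_not_bot[OF U(1)] .
  have UFseq: "UF \<le> sequentially" unfolding UF_def using ufil_le_seq[OF U] .
  define \<nu> where "\<nu> E = Lim UF (\<lambda>n. c n E)" for E
  have lim: "((\<lambda>n. c n E) \<longlongrightarrow> \<nu> E) UF" for E
  proof -
    obtain l where "((\<lambda>n. c n E) \<longlongrightarrow> l) UF" using ufil_limit_exists[OF U(1), of "\<lambda>n. c n E"] crange unfolding UF_def by blast
    moreover then have "\<nu> E = l" unfolding \<nu>_def using UFnb by (intro tendsto_Lim) auto
    ultimately show ?thesis by simp
  qed
  have uniq: "\<nu> E = l" if "((\<lambda>n. c n E) \<longlongrightarrow> l) UF" for E l
    using tendsto_unique[OF UFnb lim that] .
  have fa: "fa_inv_prob \<nu>"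
    unfolding fa_inv_prob_def
  proof (intro conjI allI impI)
    have "c n UNIV = 1" for n unfolding c_def using cpos[of n] by (simp add: card_rtr)
    then show "\<nu> UNIV = 1" using uniq[of UNIV 1] by simp
  next
    fix E
    show "0 \<le> \<nu> E" using tendsto_lowerbound[OF lim] crange UFnb by auto
  next
    fix E1 E2 :: "'g set" assume d: "E1 \<inter> E2 = {}"
    have "c n (E1 \<union> E2) = c n E1 + c n E2" for n
    proof -
      have "(E1 \<union> E2) \<inter> rtr (Fs n) (xs n) = (E1 \<inter> rtr (Fs n) (xs n)) \<union> (E2 \<inter> rtr (Fs n) (xs n))" by auto
      moreover have "card ((E1 \<inter> rtr (Fs n) (xs n)) \<union> (E2 \<inter> rtr (Fs n) (xs n)))
          = card (E1 \<inter> rtr (Fs n) (xs n)) + card (E2 \<inter> rtr (Fs n) (xs n))"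
        using finR d by (intro card_Un_disjoint) auto
      ultimately show ?thesis unfolding c_def by (simp add: add_divide_distrib)
    qed
    then show "\<nu> (E1 \<union> E2) = \<nu> E1 + \<nu> E2" using uniq tendsto_add[OF lim lim] by simp
  next
    fix g :: 'g and E :: "'g set"
    obtain N where N: "e N = - g" using esurj by blast
    have bound: "\<bar>c n ((\<lambda>y. g + y) ` E) - c n E\<bar> \<le> inverse (real (Suc n))" if "N \<le> n" for n
    proof -
      have "-g \<in> Kn n" using Kne[OF that] N by simp
      then have "\<bar>real (card (((\<lambda>y. g + y) ` E) \<inter> rtr (Fs n) (xs n))) - real (card (E \<inter> rtr (Fs n) (xs n)))\<bar>
           \<le> real (card (sadd (Kn n) (Fs n))) - real (card (Fs n))"
        using shift_bound[OF Fs(1) Knfin Kn0] by blast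
      also have "\<dots> \<le> inverse (real (Suc n)) * real (card (Fs n))" using Fs(3)[of n] by (simp add: algebra_simps)
      finally have "\<bar>real (card (((\<lambda>y. g + y) ` E) \<inter> rtr (Fs n) (xs n))) - real (card (E \<inter> rtr (Fs n) (xs n)))\<bar> / real (card (Fs n))
          \<le> inverse (real (Suc n))" using cpos[of n] by (simp add: divide_le_eq)
      moreover have "c n ((\<lambda>y. g + y) ` E) - c n E = (real (card (((\<lambda>y. g + y) ` E) \<inter> rtr (Fs n) (xs n))) - real (card (E \<inter> rtr (Fs n) (xs n)))) / real (card (Fs n))"
        unfolding c_def by (simp add: diff_divide_distrib)
      ultimately show ?thesis by simp
    qed
    have ev: "eventually (\<lambda>n. norm (c n ((\<lambda>y. g + y) ` E) - c n E) \<le> inverse (real (Suc n))) UF"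
    proof -
      have "eventually (\<lambda>n. N \<le> n) sequentially" by (rule eventually_ge_at_top)
      then have "eventually (\<lambda>n. N \<le> n) UF" using UFseq by (rule filter_leD[rotated])
      then show ?thesis by eventually_elim (use bound in auto)
    qed
    have "((\<lambda>n. inverse (real (Suc n))) \<longlongrightarrow> 0) UF"
      using tendsto_mono[OF UFseq LIMSEQ_inverse_real_of_nat] .
    then have "((\<lambda>n. c n ((\<lambda>y. g + y) ` E) - c n E) \<longlongrightarrow> 0) UF" using Lim_null_comparison[OF ev] by blast
    moreover have "((\<lambda>n. c n ((\<lambda>y. g + y) ` E) - c n E) \<longlongrightarrow> \<nu> ((\<lambda>y. g + y) ` E) - \<nu> E) UF"
      using tendsto_diff[OF lim lim] .
    ultimately have "\<nu> ((\<lambda>y. g + y) ` E) - \<nu> E = 0" using tendsto_unique[OF UFnb] by blast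
    then show "\<nu> ((\<lambda>x. g + x) ` E) = \<nu> E" by simp
  qed
  have "\<nu> B \<le> \<nu> A"
  proof (rule tendsto_le[OF _ lim lim])
    show "\<not> trivial_limit UF" using UFnb by simp
    show "eventually (\<lambda>n. c n B \<le> c n A) UF"
      using xs cpos unfolding c_def by (intro always_eventually allI) (simp add: divide_right_mono)
  qed
  moreover have "\<nu> A < \<nu> B" using hyp fa by blast
  ultimately show False by linarith
qed


lemma hall_from_uniform:
  fixes A B F :: "'g::group_add set"
  assumes F: "finite F" "F \<noteq> {}" and unif: "\<forall>x. card (A \<inter> rtr F x) < card (B \<inter> rtr F x)"
    and S: "S \<subseteq> A" "finite S"
  defines "Kd \<equiv> (\<lambda>p. fst p + - snd p) ` (F \<times> F)"
  shows "card S \<le> card (\<Union>a\<in>S. B \<inter> (\<lambda>k. k + a) ` Kd)"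
proof (cases "S = {}")
  case True then show ?thesis by simp
next
  case Sne: False
  define X where "X = (\<lambda>p. - fst p + snd p) ` (F \<times> S)"
  have finX: "finite X" unfolding X_def using F S by auto
  have Xne: "X \<noteq> {}" unfolding X_def using F Sne by auto
  define P1 where "P1 = Sigma X (\<lambda>x. {s\<in>F. s + x \<in> S})"
  define P2 where "P2 = Sigma X (\<lambda>x. {s\<in>F. s + x \<in> B})"
  define NS where "NS = (\<Union>a\<in>S. B \<inter> (\<lambda>k. k + a) ` Kd)"
  have finKd: "finite Kd" unfolding Kd_def using F by auto
  have finNS: "finite NS" unfolding NS_def using S finKd by auto
  have "P1 = (\<lambda>p. (- fst p + snd p, fst p)) ` (F \<times> S)"
  proof (rule set_eqI, rule iffI)
    fix q assume "q \<in> P1"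
    then obtain x s where q: "q = (x, s)" "x \<in> X" "s \<in> F" "s + x \<in> S" unfolding P1_def by auto
    have "x = - s + (s + x)" by (simp add: add.assoc[symmetric])
    then have "q = (\<lambda>p. (- fst p + snd p, fst p)) (s, s + x)" using q by simp
    then show "q \<in> (\<lambda>p. (- fst p + snd p, fst p)) ` (F \<times> S)" using q by blast
  next
    fix q assume "q \<in> (\<lambda>p. (- fst p + snd p, fst p)) ` (F \<times> S)"
    then obtain s a where q: "q = (- s + a, s)" "s \<in> F" "a \<in> S" by auto
    have "- s + a \<in> X" unfolding X_def using q by force
    moreover have "s + (- s + a) = a" by (simp add: add.assoc[symmetric])
    ultimately show "q \<in> P1" unfolding P1_def using q by auto
  qed
  moreover have "inj_on (\<lambda>p. (- fst p + snd p, fst p)) (F \<times> S)"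
    by (auto simp: inj_on_def)
  ultimately have cP1: "card P1 = card F * card S"
    by (simp add: card_image card_cartesian_product)
  have cP1': "card P1 = (\<Sum>x\<in>X. card {s\<in>F. s + x \<in> S})"
    unfolding P1_def using finX F by (simp add: card_SigmaI)
  have cP2': "card P2 = (\<Sum>x\<in>X. card {s\<in>F. s + x \<in> B})"
    unfolding P2_def using finX F by (simp add: card_SigmaI)
  have injx: "inj_on (\<lambda>s. s + x) Y" for x :: 'g and Y by (simp add: inj_on_def)
  have le1: "card {s\<in>F. s + x \<in> S} \<le> card (A \<inter> rtr F x)" for x
  proof -
    have "card {s\<in>F. s + x \<in> S} = card ((\<lambda>s. s + x) ` {s\<in>F. s + x \<in> S})" using injx by (simp add: card_image)
    also have "\<dots> \<le> card (A \<inter> rtr F x)"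
      by (rule card_mono) (use F S in \<open>auto simp: rtr_def\<close>)
    finally show ?thesis .
  qed
  have eq2: "card {s\<in>F. s + x \<in> B} = card (B \<inter> rtr F x)" for x
  proof -
    have "card {s\<in>F. s + x \<in> B} = card ((\<lambda>s. s + x) ` {s\<in>F. s + x \<in> B})" using injx by (simp add: card_image)
    also have "(\<lambda>s. s + x) ` {s\<in>F. s + x \<in> B} = B \<inter> rtr F x" unfolding rtr_def by auto
    finally show ?thesis .
  qed
  have "card P2 \<le> card (F \<times> NS)"
  proof (rule card_inj_on_le)
    show "inj_on (\<lambda>q. (snd q, snd q + fst q)) P2"
    proof (rule inj_onI)
      fix q q' assume "q \<in> P2" "q' \<in> P2" "(snd q, snd q + fst q) = (snd q', snd q' + fst q')"
      then show "q = q'" by (auto simp: prod_eq_iff)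
    qed
    show "(\<lambda>q. (snd q, snd q + fst q)) ` P2 \<subseteq> F \<times> NS"
    proof
      fix r assume "r \<in> (\<lambda>q. (snd q, snd q + fst q)) ` P2"
      then obtain x s where r: "r = (s, s + x)" "x \<in> X" "s \<in> F" "s + x \<in> B" unfolding P2_def by auto
      obtain t a where ta: "t \<in> F" "a \<in> S" "x = - t + a" using r(2) unfolding X_def by auto
      have "s + x = (s + - t) + a" by (simp only: ta(3) add.assoc)
      moreover have "s + - t \<in> Kd" unfolding Kd_def using r(3) ta(1) by force
      ultimately have "s + x \<in> (\<lambda>k. k + a) ` Kd" by blast
      then have "s + x \<in> NS" unfolding NS_def using r(4) ta(2) by blast
      then show "r \<in> F \<times> NS" using r by auto
    qed
    show "finite (F \<times> NS)" using F finNS by auto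
  qed
  also have "\<dots> = card F * card NS" by (rule card_cartesian_product)
  finally have cP2: "card P2 \<le> card F * card NS" .
  have "(\<Sum>x\<in>X. card {s\<in>F. s + x \<in> S}) \<le> (\<Sum>x\<in>X. card (A \<inter> rtr F x))" by (intro sum_mono le1)
  also have "\<dots> < (\<Sum>x\<in>X. card (B \<inter> rtr F x))" using finX Xne unif by (intro sum_strict_mono) auto
  also have "\<dots> = card P2" using cP2' eq2 by simp
  finally have "card F * card S < card F * card NS" using cP1 cP1' cP2 by linarith
  then show ?thesis unfolding NS_def by simp
qed

lemma comparison_sets:
  fixes A B :: "'g::group_add set"
  assumes cnt: "countable (UNIV::'g set)" and am: "amenable TYPE('g)"
    and hyp: "\<forall>\<mu>. fa_inv_prob \<mu> \<longrightarrow> \<mu> A < \<mu> B"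
  shows "\<exists>(n::nat) (P::nat \<Rightarrow> 'g set) (\<gamma>::nat \<Rightarrow> 'g).
          A = (\<Union>i<n. P i) \<and>
          (\<forall>i<n. \<forall>j<n. i \<noteq> j \<longrightarrow> P i \<inter> P j = {}) \<and>
          (\<forall>i<n. (\<lambda>x. \<gamma> i + x) ` P i \<subseteq> B) \<and>
          (\<forall>i<n. \<forall>j<n. i \<noteq> j \<longrightarrow> (\<lambda>x. \<gamma> i + x) ` P i \<inter> (\<lambda>x. \<gamma> j + x) ` P j = {})"
proof -
  obtain F where F: "finite F" "F \<noteq> {}" "\<forall>x. card (A \<inter> rtr F x) < card (B \<inter> rtr F x)"
    using uniform_cond[OF cnt am hyp] by blast
  define Kd where "Kd = (\<lambda>p. fst p + - snd p) ` (F \<times> F)"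
  have finKd: "finite Kd" unfolding Kd_def using F by auto
  define N where "N = (\<lambda>a. B \<inter> (\<lambda>k. k + a) ` Kd)"
  have cA: "countable A" by (rule countable_subset[OF subset_UNIV cnt])
  have fN: "\<forall>a\<in>A. finite (N a)" unfolding N_def using finKd by auto
  have hc: "\<forall>S\<subseteq>A. finite S \<longrightarrow> card S \<le> card (\<Union>(N ` S))"
  proof (intro allI impI)
    fix S assume "S \<subseteq> A" "finite S"
    from hall_from_uniform[OF F this] show "card S \<le> card (\<Union>(N ` S))"
      unfolding N_def Kd_def .
  qed
  from hall_countable[OF cA fN hc] obtain \<phi> where phi: "inj_on \<phi> A" "\<forall>a\<in>A. \<phi> a \<in> N a"
    by blast
  obtain ks where ks: "set ks = Kd" "distinct ks" using finite_distinct_list[OF finKd] by blast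
  define n where "n = length ks"
  define P where "P = (\<lambda>i. {a\<in>A. \<phi> a + - a = ks ! i})"
  define \<gamma> where "\<gamma> = (\<lambda>i. ks ! i)"
  have key: "\<gamma> i + a = \<phi> a" if "a \<in> P i" for i a
  proof -
    have "\<phi> a + - a = ks ! i" using that unfolding P_def by auto
    then have "ks ! i + a = \<phi> a + - a + a" by simp
    then show ?thesis unfolding \<gamma>_def by (simp add: add.assoc)
  qed
  have c1: "A = (\<Union>i<n. P i)"
  proof
    show "A \<subseteq> (\<Union>i<n. P i)"
    proof
      fix a assume a: "a \<in> A"
      then obtain k where k: "k \<in> Kd" "\<phi> a = k + a" using phi(2) unfolding N_def by auto
      have "k \<in> set ks" using k(1) ks(1) by simp
      then obtain i where i: "i < n" "ks ! i = k" unfolding n_def by (auto simp: in_set_conv_nth)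
      have "\<phi> a + - a = k" using k(2) by (simp add: add.assoc)
      then show "a \<in> (\<Union>i<n. P i)" using a i unfolding P_def by force
    qed
    show "(\<Union>i<n. P i) \<subseteq> A" unfolding P_def by auto
  qed
  have c2: "\<forall>i<n. \<forall>j<n. i \<noteq> j \<longrightarrow> P i \<inter> P j = {}"
  proof (intro allI impI)
    fix i j assume ij: "i < n" "j < n" "i \<noteq> j"
    then have "ks ! i \<noteq> ks ! j" using ks(2) unfolding n_def by (simp add: nth_eq_iff_index_eq)
    then show "P i \<inter> P j = {}" unfolding P_def by auto
  qed
  have c3: "\<forall>i<n. (\<lambda>x. \<gamma> i + x) ` P i \<subseteq> B"
  proof (intro allI impI subsetI)
    fix i y assume "i < n" "y \<in> (\<lambda>x. \<gamma> i + x) ` P i"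
    then obtain a where a: "a \<in> P i" "y = \<gamma> i + a" by auto
    then have "y = \<phi> a" using key by simp
    moreover have "a \<in> A" using a unfolding P_def by auto
    ultimately show "y \<in> B" using phi(2) unfolding N_def by auto
  qed
  have c4: "\<forall>i<n. \<forall>j<n. i \<noteq> j \<longrightarrow> (\<lambda>x. \<gamma> i + x) ` P i \<inter> (\<lambda>x. \<gamma> j + x) ` P j = {}"
  proof (intro allI impI)
    fix i j assume ij: "i < n" "j < n" "i \<noteq> j"
    show "(\<lambda>x. \<gamma> i + x) ` P i \<inter> (\<lambda>x. \<gamma> j + x) ` P j = {}"
    proof (rule ccontr)
      assume "(\<lambda>x. \<gamma> i + x) ` P i \<inter> (\<lambda>x. \<gamma> j + x) ` P j \<noteq> {}"
      then obtain a a' where aa: "a \<in> P i" "a' \<in> P j" "\<gamma> i + a = \<gamma> j + a'" by blast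
      have "\<phi> a = \<phi> a'" using key[OF aa(1)] key[OF aa(2)] aa(3) by simp
      moreover have "a \<in> A" "a' \<in> A" using aa unfolding P_def by auto
      ultimately have "a = a'" using phi(1) by (meson inj_onD)
      then have "\<gamma> i = \<gamma> j" using aa(3) by simp
      then show False using ij ks(2) unfolding \<gamma>_def n_def by (simp add: nth_eq_iff_index_eq)
    qed
  qed
  show ?thesis
    by (rule exI[of _ n], rule exI[of _ P], rule exI[of _ \<gamma>]) (intro conjI c1 c2 c3 c4)
qed


definition bset :: "'g set \<Rightarrow> 'g set set set" where
  "bset A = {U \<in> beta_space. A \<in> U}"

definition pu :: "'g \<Rightarrow> 'g set set" where
  "pu x = {A. x \<in> A}"

lemma beta_space_iff: "U \<in> beta_space \<longleftrightarrow> is_ultrafilter_on U"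
  unfolding beta_space_def by simp

lemma pu_ultra: "pu x \<in> beta_space"
  unfolding beta_space_iff is_ultrafilter_on_def pu_def by auto

lemma pu_bset: "pu x \<in> bset A \<longleftrightarrow> x \<in> A"
  unfolding bset_def using pu_ultra by (auto simp: pu_def)

lemma bset_sub_beta: "bset A \<subseteq> beta_space"
  unfolding bset_def by auto

lemma bset_UNIV: "bset UNIV = beta_space"
  unfolding bset_def by (auto simp: beta_space_iff is_ultrafilter_on_def)

lemma bset_Int: "bset (A \<inter> B) = bset A \<inter> bset B"
  unfolding bset_def by (auto simp: beta_space_iff ultra_int_iff)

lemma bset_Un: "bset (A \<union> B) = bset A \<union> bset B"
  unfolding bset_def by (auto simp: beta_space_iff ultra_union_iff)

lemma bset_Compl: "bset (- A) = beta_space - bset A"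
  unfolding bset_def by (auto simp: beta_space_iff ultra_compl_iff)

lemma bset_empty: "bset {} = {}"
  unfolding bset_def by (auto simp: beta_space_iff is_ultrafilter_on_def)

lemma bset_UN:
  assumes "finite I"
  shows "bset (\<Union>i\<in>I. P i) = (\<Union>i\<in>I. bset (P i))"
  using assms by (induction I rule: finite_induct) (simp_all add: bset_empty bset_Un)

lemma bset_subD: "bset A \<subseteq> bset B \<Longrightarrow> A \<subseteq> B"
proof
  fix x assume sub: "bset A \<subseteq> bset B" and "x \<in> A"
  then have "pu x \<in> bset A" by (simp add: pu_bset)
  then have "pu x \<in> bset B" using sub by blast
  then show "x \<in> B" by (simp add: pu_bset)
qed

lemma bset_disjD: "bset A \<inter> bset B = {} \<Longrightarrow> A \<inter> B = {}"
proof (rule ccontr)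
  assume "bset A \<inter> bset B = {}" "A \<inter> B \<noteq> {}"
  then obtain x where "x \<in> A" "x \<in> B" by blast
  then have "pu x \<in> bset A \<inter> bset B" by (simp add: pu_bset)
  then show False using \<open>bset A \<inter> bset B = {}\<close> by blast
qed

lemma bset_mono: "A \<subseteq> B \<Longrightarrow> bset A \<subseteq> bset B"
  unfolding bset_def by (auto simp: beta_space_iff is_ultrafilter_on_def)

lemma beta_top_alt: "beta_top = topology_generated_by (range bset)"
proof -
  have eq: "{{U \<in> beta_space. A \<in> U} | A. True} = range bset" unfolding bset_def by auto
  show ?thesis unfolding beta_top_def eq ..
qed

lemma topspace_beta: "topspace beta_top = beta_space"
proof -
  have "\<Union>(range bset) = beta_space" using bset_sub_beta bset_UNIV by blast
  then show ?thesis unfolding beta_top_alt by simp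
qed

lemma openin_bset: "openin beta_top (bset A)"
  unfolding beta_top_alt by (rule topology_generated_by_Basis) auto

lemma closedin_bset: "closedin beta_top (bset A)"
  unfolding closedin_def topspace_beta using bset_sub_beta openin_bset[of "- A"] by (simp add: bset_Compl)

lemma clopenin_bset: "clopenin beta_top (bset A)"
  unfolding clopenin_def using openin_bset closedin_bset by blast

lemma openin_basic:
  assumes "openin beta_top Ob" "U \<in> Ob"
  shows "\<exists>D. U \<in> bset D \<and> bset D \<subseteq> Ob"
proof -
  have "generate_topology_on (range bset) Ob" using assms(1) unfolding beta_top_alt
    by (rule openin_topology_generated_by)
  then show ?thesis using assms(2)
  proof (induction arbitrary: U rule: generate_topology_on.induct)
    case Empty then show ?case by simp
  next
    case (Int a b)
    obtain D1 where D1: "U \<in> bset D1" "bset D1 \<subseteq> a" using Int by blast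
    obtain D2 where D2: "U \<in> bset D2" "bset D2 \<subseteq> b" using Int by blast
    have "U \<in> bset (D1 \<inter> D2)" "bset (D1 \<inter> D2) \<subseteq> a \<inter> b" using D1 D2 by (auto simp: bset_Int)
    then show ?case by blast
  next
    case (UN K)
    then obtain k where "k \<in> K" "U \<in> k" by blast
    then obtain D where "U \<in> bset D" "bset D \<subseteq> k" using UN.IH by blast
    then show ?case using \<open>k \<in> K\<close> by blast
  next
    case (Basis s)
    then show ?case by blast
  qed
qed

lemma openin_sub_beta: "openin beta_top Ob \<Longrightarrow> Ob \<subseteq> beta_space"
proof -
  assume "openin beta_top Ob"
  then have "Ob \<subseteq> topspace beta_top" by (rule openin_subset)
  then show ?thesis by (simp add: topspace_beta)
qed

lemma clopen_is_bset:
  assumes "clopenin beta_top C"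
  shows "\<exists>A. C = bset A"
proof -
  have oC: "openin beta_top C" and cC: "closedin beta_top C" using assms unfolding clopenin_def by auto
  have oC': "openin beta_top (beta_space - C)" using cC unfolding closedin_def topspace_beta by auto
  have Csub: "C \<subseteq> beta_space" using openin_sub_beta[OF oC] .
  define A where "A = {x. pu x \<in> C}"
  have "C = bset A"
  proof
    show "C \<subseteq> bset A"
    proof
      fix U assume U: "U \<in> C"
      obtain D where D: "U \<in> bset D" "bset D \<subseteq> C" using openin_basic[OF oC U] by blast
      have "D \<subseteq> A"
      proof
        fix x assume "x \<in> D"
        then have "pu x \<in> bset D" by (simp add: pu_bset)
        then show "x \<in> A" using D(2) unfolding A_def by blast
      qed
      moreover have "D \<in> U" "U \<in> beta_space" using D(1) unfolding bset_def by auto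
      ultimately have "A \<in> U" unfolding beta_space_iff is_ultrafilter_on_def by blast
      then show "U \<in> bset A" using \<open>U \<in> beta_space\<close> unfolding bset_def by auto
    qed
  next
    show "bset A \<subseteq> C"
    proof
      fix U assume U: "U \<in> bset A"
      show "U \<in> C"
      proof (rule ccontr)
        assume "U \<notin> C"
        then have "U \<in> beta_space - C" using U bset_sub_beta by blast
        then obtain E where E: "U \<in> bset E" "bset E \<subseteq> beta_space - C" using openin_basic[OF oC'] by blast
        have "E \<inter> A = {}"
        proof (rule ccontr)
          assume "E \<inter> A \<noteq> {}"
          then obtain x where x: "x \<in> E" "x \<in> A" by blast
          then have "pu x \<in> bset E" by (simp add: pu_bset)
          moreover have "pu x \<in> C" using x(2) unfolding A_def by simp
          ultimately show False using E(2) by blast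
        qed
        then have "bset E \<inter> bset A = {}" by (metis bset_Int bset_empty)
        then show False using E(1) U by blast
      qed
    qed
  qed
  then show ?thesis by blast
qed

lemma compactin_bset: "compactin beta_top (bset A)"
  unfolding compactin_def
proof (intro conjI allI impI)
  show "bset A \<subseteq> topspace beta_top" using bset_sub_beta topspace_beta by blast
next
  fix \<U> assume \<U>: "(\<forall>U\<in>\<U>. openin beta_top U) \<and> bset A \<subseteq> \<Union>\<U>"
  show "\<exists>\<F>. finite \<F> \<and> \<F> \<subseteq> \<U> \<and> bset A \<subseteq> \<Union>\<F>"
  proof (rule ccontr)
    assume nc: "\<not> ?thesis"
    define \<D> where "\<D> = {D. \<exists>Ob\<in>\<U>. bset D \<subseteq> Ob}"
    define ch where "ch D = (SOME Ob. Ob \<in> \<U> \<and> bset D \<subseteq> Ob)" for D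
    have ch: "ch D \<in> \<U>" "bset D \<subseteq> ch D" if "D \<in> \<D>" for D
      using someI_ex[of "\<lambda>Ob. Ob \<in> \<U> \<and> bset D \<subseteq> Ob"] that unfolding \<D>_def ch_def by auto
    have "fip (insert A (uminus ` \<D>))"
      unfolding fip_def
    proof (intro allI impI)
      fix F assume F: "F \<subseteq> insert A (uminus ` \<D>) \<and> finite F"
      then have "F - {A} \<subseteq> uminus ` \<D>" "finite (F - {A})" by auto
      then obtain \<D>' where D': "\<D>' \<subseteq> \<D>" "finite \<D>'" "F - {A} = uminus ` \<D>'"
        by (meson finite_subset_image)
      have sub: "A \<inter> \<Inter>(uminus ` \<D>') \<subseteq> \<Inter>F"
      proof
        fix x assume x: "x \<in> A \<inter> \<Inter>(uminus ` \<D>')"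
        show "x \<in> \<Inter>F"
        proof
          fix X assume "X \<in> F"
          then have "X = A \<or> X \<in> uminus ` \<D>'" using D'(3) by blast
          then show "x \<in> X" using x by blast
        qed
      qed
      have "A \<inter> \<Inter>(uminus ` \<D>') \<noteq> {}"
      proof
        assume e: "A \<inter> \<Inter>(uminus ` \<D>') = {}"
        then have "A \<subseteq> (\<Union>D\<in>\<D>'. D)" by blast
        then have "bset A \<subseteq> bset (\<Union>D\<in>\<D>'. D)" by (rule bset_mono)
        also have "bset (\<Union>D\<in>\<D>'. D) = (\<Union>D\<in>\<D>'. bset D)" by (rule bset_UN[OF D'(2)])
        also have "\<dots> \<subseteq> \<Union>(ch ` \<D>')" using ch D'(1) by blast
        finally have "bset A \<subseteq> \<Union>(ch ` \<D>')" .
        moreover have "ch ` \<D>' \<subseteq> \<U>" using ch D'(1) by blast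
        moreover have "finite (ch ` \<D>')" using D'(2) by simp
        ultimately show False using nc by blast
      qed
      then show "\<Inter>F \<noteq> {}" using sub by blast
    qed
    then obtain W where W: "is_ultrafilter_on W" "insert A (uminus ` \<D>) \<subseteq> W" using ultrafilter_exists by blast
    then have "W \<in> bset A" unfolding bset_def beta_space_iff by auto
    then obtain Ob where Ob: "Ob \<in> \<U>" "W \<in> Ob" using \<U> by blast
    then obtain D where D: "W \<in> bset D" "bset D \<subseteq> Ob" using openin_basic \<U> by blast
    then have "D \<in> \<D>" unfolding \<D>_def using Ob by blast
    then have "- D \<in> W" using W by blast
    moreover have "D \<in> W" using D unfolding bset_def by auto
    ultimately show False using W(1) by (simp add: ultra_compl_iff)
  qed
qed

lemma hausdorff_beta: "Hausdorff_space beta_top"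
  unfolding Hausdorff_space_def topspace_beta
proof (intro allI impI)
  fix x y :: "'a set set" assume xy: "x \<in> beta_space \<and> y \<in> beta_space \<and> x \<noteq> y"
  have "\<exists>A. A \<in> x \<and> A \<notin> y"
  proof (rule ccontr)
    assume "\<not> ?thesis"
    then have "x \<subseteq> y" by blast
    moreover have "y \<subseteq> x"
    proof
      fix A assume "A \<in> y"
      show "A \<in> x"
      proof (rule ccontr)
        assume "A \<notin> x"
        then have "- A \<in> x" using xy by (simp add: beta_space_iff ultra_compl_iff)
        then have "- A \<in> y" using \<open>x \<subseteq> y\<close> by blast
        then show False using \<open>A \<in> y\<close> xy by (simp add: beta_space_iff ultra_compl_iff)
      qed
    qed
    ultimately show False using xy by blast
  qed
  then obtain A where A: "A \<in> x" "A \<notin> y" by blast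
  then have "- A \<in> y" using xy by (simp add: beta_space_iff ultra_compl_iff)
  then have "x \<in> bset A" "y \<in> bset (- A)" using A xy unfolding bset_def by auto
  moreover have "disjnt (bset A) (bset (- A))" unfolding disjnt_def bset_Compl by blast
  ultimately show "\<exists>U V. openin beta_top U \<and> openin beta_top V \<and> x \<in> U \<and> y \<in> V \<and> disjnt U V"
    using openin_bset by blast
qed


definition lt :: "'g::group_add \<Rightarrow> 'g set \<Rightarrow> 'g set" where
  "lt g A = (\<lambda>x. g + x) ` A"

lemma lt_lt: "lt (- g) (lt g A) = A"
  unfolding lt_def image_image by (simp add: add.assoc[symmetric])

lemma lt_lt': "lt g (lt (- g) A) = A"
  using lt_lt[of "- g" A] by simp

lemma lt_inj: "inj (lt g)"
  by (metis injI lt_lt)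

lemma lt_Int: "lt g (A \<inter> B) = lt g A \<inter> lt g B"
  unfolding lt_def by (rule image_Int) (simp add: inj_on_def)

lemma lt_mem: "x \<in> lt g A \<longleftrightarrow> - g + x \<in> A"
proof
  assume "x \<in> lt g A"
  then obtain a where "a \<in> A" "x = g + a" unfolding lt_def by auto
  then show "- g + x \<in> A" by (simp add: add.assoc[symmetric])
next
  assume "- g + x \<in> A"
  moreover have "x = g + (- g + x)" by (simp add: add.assoc[symmetric])
  ultimately show "x \<in> lt g A" unfolding lt_def by blast
qed

lemma lt_Compl: "lt g (- A) = - lt g A"
  by (auto simp: lt_mem)

lemma lt_UNIV: "lt g UNIV = UNIV"
  using lt_Compl[of g "{}"] unfolding lt_def by simp

lemma lt_empty: "lt g {} = {}"
  unfolding lt_def by simp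

lemma lt_mono: "A \<subseteq> B \<Longrightarrow> lt g A \<subseteq> lt g B"
  unfolding lt_def by auto

lemma ba_mem: "E \<in> beta_action g U \<longleftrightarrow> lt (- g) E \<in> U"
proof
  assume "E \<in> beta_action g U"
  then obtain A where "A \<in> U" "E = lt g A" unfolding beta_action_def lt_def by auto
  then show "lt (- g) E \<in> U" by (simp add: lt_lt)
next
  assume "lt (- g) E \<in> U"
  moreover have "E = (\<lambda>x. g + x) ` (lt (- g) E)" using lt_lt'[of g E] unfolding lt_def by simp
  ultimately show "E \<in> beta_action g U" unfolding beta_action_def by blast
qed

lemma ba_ultra:
  assumes "is_ultrafilter_on U"
  shows "is_ultrafilter_on (beta_action g U)"
  using assms unfolding is_ultrafilter_on_def ba_mem
  by (simp add: lt_empty lt_UNIV lt_Int lt_Compl) (meson lt_mono)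

lemma ba_beta: "U \<in> beta_space \<Longrightarrow> beta_action g U \<in> beta_space"
  using ba_ultra beta_space_iff by blast

lemma ba_inv: "beta_action (- g) (beta_action g U) = U"
  unfolding set_eq_iff ba_mem by (simp add: lt_lt)

lemma ba_inj: "inj (beta_action g)"
  by (metis injI ba_inv)

lemma ba_bset: "beta_action g ` bset A = bset (lt g A)"
proof
  show "beta_action g ` bset A \<subseteq> bset (lt g A)"
  proof
    fix V assume "V \<in> beta_action g ` bset A"
    then obtain U where U: "U \<in> bset A" "V = beta_action g U" by blast
    then have "V \<in> beta_space" using ba_beta unfolding bset_def by auto
    moreover have "lt g A \<in> V" using U by (simp add: ba_mem bset_def lt_lt)
    ultimately show "V \<in> bset (lt g A)" unfolding bset_def by simp
  qed
next
  show "bset (lt g A) \<subseteq> beta_action g ` bset A"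
  proof
    fix V assume V: "V \<in> bset (lt g A)"
    define U where "U = beta_action (- g) V"
    have "V = beta_action g U" unfolding U_def using ba_inv[of "- g" V] by simp
    moreover have "U \<in> bset A"
    proof -
      have "U \<in> beta_space" using V ba_beta unfolding U_def bset_def by auto
      moreover have "A \<in> U" using V unfolding U_def ba_mem bset_def by simp
      ultimately show ?thesis unfolding bset_def by simp
    qed
    ultimately show "V \<in> beta_action g ` bset A" by blast
  qed
qed

lemma ba_space: "beta_action g ` beta_space = beta_space"
  using ba_bset[of g UNIV] by (simp add: bset_UNIV lt_UNIV)

lemma ba_open:
  assumes "openin beta_top Ob"
  shows "openin beta_top (beta_action g ` Ob)"
proof -
  have "generate_topology_on (range bset) Ob" using assms unfolding beta_top_alt
    by (rule openin_topology_generated_by)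
  then have "generate_topology_on (range bset) (beta_action g ` Ob)"
  proof (induction rule: generate_topology_on.induct)
    case Empty then show ?case by (simp add: generate_topology_on.Empty)
  next
    case (Int a b)
    have "beta_action g ` (a \<inter> b) = beta_action g ` a \<inter> beta_action g ` b"
      by (rule image_Int[OF ba_inj])
    then show ?case using Int by (simp add: generate_topology_on.Int)
  next
    case (UN K)
    have "beta_action g ` \<Union>K = \<Union>((\<lambda>k. beta_action g ` k) ` K)" by auto
    then show ?case using UN by (auto intro!: generate_topology_on.UN)
  next
    case (Basis s)
    then obtain A where "s = bset A" by blast
    then have "beta_action g ` s = bset (lt g A)" using ba_bset by simp
    then show ?case by (auto intro: generate_topology_on.Basis)
  qed
  then show ?thesis unfolding beta_top_alt by (simp add: openin_topology_generated_by_iff)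
qed

lemma ba_borel:
  assumes "E \<in> borel_sets_of beta_top"
  shows "beta_action g ` E \<in> borel_sets_of beta_top"
  using assms unfolding borel_sets_of_def topspace_beta
proof (induction rule: sigma_sets.induct)
  case (Basic a)
  then show ?case using ba_open by (auto intro: sigma_sets.Basic)
next
  case Empty then show ?case by (simp add: sigma_sets.Empty)
next
  case (Compl a)
  have "beta_action g ` (beta_space - a) = beta_space - beta_action g ` a"
    using ba_inj ba_space by (metis image_set_diff)
  then show ?case using Compl by (simp add: sigma_sets.Compl)
next
  case (Union a)
  have "beta_action g ` (\<Union>i. a i) = (\<Union>i. beta_action g ` a i)" by auto
  then show ?case using Union by (simp add: sigma_sets.Union)
qed


definition lamb :: "('g set \<Rightarrow> real) \<Rightarrow> 'g set set set \<Rightarrow> ennreal" where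
  "lamb \<nu> Ob = (SUP A \<in> {A. bset A \<subseteq> Ob}. ennreal (\<nu> A))"

definition omu :: "('g set \<Rightarrow> real) \<Rightarrow> 'g set set set \<Rightarrow> ennreal" where
  "omu \<nu> E = (INF U \<in> {U. openin beta_top U \<and> E \<subseteq> U}. lamb \<nu> U)"

lemma refine:
  assumes cov: "bset A \<subseteq> \<Union>Vs" and op: "\<forall>V\<in>Vs. openin beta_top V"
  shows "\<exists>Ds. finite Ds \<and> A \<subseteq> \<Union>Ds \<and> (\<forall>D\<in>Ds. \<exists>V\<in>Vs. bset D \<subseteq> V)"
proof -
  define \<D> where "\<D> = {D. \<exists>V\<in>Vs. bset D \<subseteq> V}"
  have "bset A \<subseteq> \<Union>(bset ` \<D>)"
  proof
    fix U assume U: "U \<in> bset A"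
    then obtain V where V: "V \<in> Vs" "U \<in> V" using cov by blast
    then obtain D where "U \<in> bset D" "bset D \<subseteq> V" using openin_basic op by blast
    then show "U \<in> \<Union>(bset ` \<D>)" unfolding \<D>_def using V by blast
  qed
  moreover have "\<forall>C\<in>bset ` \<D>. openin beta_top C" using openin_bset by blast
  ultimately obtain \<F> where F: "finite \<F>" "\<F> \<subseteq> bset ` \<D>" "bset A \<subseteq> \<Union>\<F>"
    using compactin_bset[of A] unfolding compactin_def by meson
  then obtain Ds where Ds: "Ds \<subseteq> \<D>" "finite Ds" "\<F> = bset ` Ds"
    by (meson finite_subset_image)
  have "bset A \<subseteq> bset (\<Union>D\<in>Ds. D)" using F(3) Ds(3) bset_UN[OF Ds(2), of id] by simp
  then have "A \<subseteq> \<Union>Ds" using bset_subD by simp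
  then show ?thesis using Ds unfolding \<D>_def by blast
qed

context
  fixes \<nu> :: "'g::group_add set \<Rightarrow> real"
  assumes fa: "fa_inv_prob \<nu>"
begin

lemma lamb_mono: "O1 \<subseteq> O2 \<Longrightarrow> lamb \<nu> O1 \<le> lamb \<nu> O2"
  unfolding lamb_def by (rule SUP_subset_mono) auto

lemma lamb_bset: "lamb \<nu> (bset A) = ennreal (\<nu> A)"
  unfolding lamb_def
proof (rule antisym)
  show "(SUP C \<in> {C. bset C \<subseteq> bset A}. ennreal (\<nu> C)) \<le> ennreal (\<nu> A)"
  proof (rule SUP_least)
    fix C assume "C \<in> {C. bset C \<subseteq> bset A}"
    then have "C \<subseteq> A" using bset_subD by auto
    then show "ennreal (\<nu> C) \<le> ennreal (\<nu> A)" using fa_mono[OF fa] by (simp add: ennreal_leI)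
  qed
  show "ennreal (\<nu> A) \<le> (SUP C \<in> {C. bset C \<subseteq> bset A}. ennreal (\<nu> C))"
    by (rule SUP_upper) auto
qed

lemma lamb_empty: "lamb \<nu> {} = 0"
  using lamb_bset[of "{}"] fa_empty[OF fa] by (simp add: bset_empty)

lemma omu_open: "openin beta_top U \<Longrightarrow> omu \<nu> U = lamb \<nu> U"
  unfolding omu_def
proof (rule antisym)
  assume "openin beta_top U"
  then show "(INF V \<in> {V. openin beta_top V \<and> U \<subseteq> V}. lamb \<nu> V) \<le> lamb \<nu> U"
    by (intro INF_lower) auto
  show "lamb \<nu> U \<le> (INF V \<in> {V. openin beta_top V \<and> U \<subseteq> V}. lamb \<nu> V)"
    by (rule INF_greatest) (auto intro: lamb_mono)
qed

lemma omu_mono: "E1 \<subseteq> E2 \<Longrightarrow> omu \<nu> E1 \<le> omu \<nu> E2"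
  unfolding omu_def by (rule INF_superset_mono) auto

lemma omu_empty: "omu \<nu> {} = 0"
  using omu_open[of "{}"] lamb_empty by simp

lemma omu_bset: "omu \<nu> (bset A) = ennreal (\<nu> A)"
  using omu_open[OF openin_bset] lamb_bset by simp

lemma omu_le_open: "openin beta_top U \<Longrightarrow> E \<subseteq> U \<Longrightarrow> omu \<nu> E \<le> lamb \<nu> U"
  unfolding omu_def by (rule INF_lower2[of U]) auto

lemma lamb_countable_subadd:
  assumes op: "\<And>n. openin beta_top (V n)"
  shows "lamb \<nu> (\<Union>n. V n) \<le> (\<Sum>n. lamb \<nu> (V n))"
  unfolding lamb_def[of _ "\<Union>n. V n"]
proof (rule SUP_least)
  fix A assume "A \<in> {A. bset A \<subseteq> (\<Union>n. V n)}"
  then have "bset A \<subseteq> \<Union>(range V)" by auto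
  then obtain Ds where Ds: "finite Ds" "A \<subseteq> \<Union>Ds" "\<forall>D\<in>Ds. \<exists>V'\<in>range V. bset D \<subseteq> V'"
    using refine[of A "range V"] op by blast
  define N where "N D = (SOME n. bset D \<subseteq> V n)" for D
  have N: "bset D \<subseteq> V (N D)" if "D \<in> Ds" for D
    using Ds(3) that someI_ex[of "\<lambda>n. bset D \<subseteq> V n"] unfolding N_def by blast
  define G where "G n = \<Union>{D\<in>Ds. N D = n}" for n
  have finG: "finite {D\<in>Ds. N D = n}" for n using Ds(1) by auto
  have GV: "bset (G n) \<subseteq> V n" for n
  proof -
    have "bset (G n) = (\<Union>D\<in>{D\<in>Ds. N D = n}. bset D)"
      unfolding G_def using bset_UN[OF finG, of id] by simp
    then show ?thesis using N by auto
  qed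
  have AG: "A \<subseteq> (\<Union>n\<in>N ` Ds. G n)" using Ds(2) unfolding G_def by blast
  have finI: "finite (N ` Ds)" using Ds(1) by simp
  have "\<nu> A \<le> \<nu> (\<Union>n\<in>N ` Ds. G n)" using fa_mono[OF fa AG] .
  also have "\<dots> \<le> (\<Sum>n\<in>N ` Ds. \<nu> (G n))" using fa_sum_le[OF fa finI] .
  finally have "ennreal (\<nu> A) \<le> ennreal (\<Sum>n\<in>N ` Ds. \<nu> (G n))" by (rule ennreal_leI)
  also have "\<dots> = (\<Sum>n\<in>N ` Ds. ennreal (\<nu> (G n)))" using fa_nonneg[OF fa] by simp
  also have "\<dots> \<le> (\<Sum>n\<in>N ` Ds. lamb \<nu> (V n))"
  proof (rule sum_mono)
    fix n show "ennreal (\<nu> (G n)) \<le> lamb \<nu> (V n)"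
      unfolding lamb_def using GV by (intro SUP_upper) auto
  qed
  also have "\<dots> \<le> (\<Sum>n. lamb \<nu> (V n))" by (rule sum_le_suminf) (auto simp: finI)
  finally show "ennreal (\<nu> A) \<le> (\<Sum>n. lamb \<nu> (V n))" .
qed

lemma omu_countable_subadd: "omu \<nu> (\<Union>n. E n) \<le> (\<Sum>n. omu \<nu> (E n))"
proof (rule ennreal_le_epsilon)
  fix e :: real assume e: "0 < e" and fin: "(\<Sum>n. omu \<nu> (E n)) < top"
  have *: "omu \<nu> (E n) < omu \<nu> (E n) + e * (1/2)^Suc n" for n
    using e fin by (auto simp add: less_top dest!: ennreal_suminf_lessD)
  have "\<exists>U. openin beta_top U \<and> E n \<subseteq> U \<and> lamb \<nu> U < omu \<nu> (E n) + e * (1/2)^Suc n" for n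
    using *[of n] unfolding omu_def[of _ "E n"] INF_less_iff by auto
  then obtain V where V: "\<And>n. openin beta_top (V n)" "\<And>n. E n \<subseteq> V n"
    "\<And>n. lamb \<nu> (V n) < omu \<nu> (E n) + e * (1/2)^Suc n" by metis
  have "omu \<nu> (\<Union>n. E n) \<le> lamb \<nu> (\<Union>n. V n)"
    by (rule omu_le_open) (use V in auto)
  also have "\<dots> \<le> (\<Sum>n. lamb \<nu> (V n))" by (rule lamb_countable_subadd[OF V(1)])
  also have "\<dots> \<le> (\<Sum>n. omu \<nu> (E n) + e * (1/2)^Suc n)"
    by (intro suminf_le allI less_imp_le V(3)) auto
  also have "\<dots> = (\<Sum>n. omu \<nu> (E n)) + (\<Sum>n. ennreal e * ennreal ((1/2) ^ Suc n))"
    using \<open>0 < e\<close> by (subst suminf_add[symmetric])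
                       (auto simp del: ennreal_suminf_cmult simp add: ennreal_mult[symmetric])
  also have "\<dots> = (\<Sum>n. omu \<nu> (E n)) + e"
    unfolding ennreal_suminf_cmult
    by (subst suminf_ennreal_eq[OF zero_le_power power_half_series]) auto
  finally show "omu \<nu> (\<Union>n. E n) \<le> (\<Sum>n. omu \<nu> (E n)) + ennreal e" .
qed

lemma omu_outer: "outer_measure_space (Pow beta_space) (omu \<nu>)"
  unfolding outer_measure_space_def
proof (intro conjI)
  show "positive (Pow beta_space) (omu \<nu>)" unfolding positive_def using omu_empty by simp
  show "increasing (Pow beta_space) (omu \<nu>)" unfolding increasing_def using omu_mono by blast
  show "countably_subadditive (Pow beta_space) (omu \<nu>)"
    unfolding countably_subadditive_def using omu_countable_subadd by (auto simp: comp_def)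
qed

lemma omu_subadd: "omu \<nu> (X \<union> Y) \<le> omu \<nu> X + omu \<nu> Y"
proof -
  have "omu \<nu> (\<Union>n::nat. (if n = 0 then X else if n = 1 then Y else {})) \<le> (\<Sum>n::nat. omu \<nu> (if n = 0 then X else if n = 1 then Y else {}))"
    by (rule omu_countable_subadd[of "\<lambda>n. if n = 0 then X else if n = 1 then Y else {}"])
  moreover have "(\<Union>n::nat. (if n = 0 then X else if n = 1 then Y else {})) = X \<union> Y"
    by (auto split: if_splits)
  moreover have "(\<Sum>n::nat. omu \<nu> (if n = 0 then X else if n = 1 then Y else {})) = omu \<nu> X + omu \<nu> Y"
  proof -
    have "(\<Sum>n::nat. omu \<nu> (if n = 0 then X else if n = 1 then Y else {})) = (\<Sum>n::nat\<in>{0,1}. omu \<nu> (if n = 0 then X else if n = 1 then Y else {}))"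
      by (rule suminf_finite) (auto simp: omu_empty)
    then show ?thesis by simp
  qed
  ultimately show ?thesis by simp
qed

lemma open_caratheodory:
  assumes op: "openin beta_top Ob" and x: "x \<subseteq> beta_space"
  shows "omu \<nu> (Ob \<inter> x) + omu \<nu> ((beta_space - Ob) \<inter> x) = omu \<nu> x"
proof (rule antisym)
  have "x = (Ob \<inter> x) \<union> ((beta_space - Ob) \<inter> x)" using x by blast
  then show "omu \<nu> x \<le> omu \<nu> (Ob \<inter> x) + omu \<nu> ((beta_space - Ob) \<inter> x)"
    using omu_subadd by metis
next
  show "omu \<nu> (Ob \<inter> x) + omu \<nu> ((beta_space - Ob) \<inter> x) \<le> omu \<nu> x"
    unfolding omu_def[of _ x]
  proof (rule INF_greatest)
    fix V assume V: "V \<in> {U. openin beta_top U \<and> x \<subseteq> U}"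
    have opOV: "openin beta_top (Ob \<inter> V)" using op V by auto
    have "Ob \<inter> x \<subseteq> Ob \<inter> V" using V by auto
    then have "omu \<nu> (Ob \<inter> x) \<le> lamb \<nu> (Ob \<inter> V)" by (rule omu_le_open[OF opOV])
    then have "omu \<nu> (Ob \<inter> x) + omu \<nu> ((beta_space - Ob) \<inter> x) \<le> lamb \<nu> (Ob \<inter> V) + omu \<nu> ((beta_space - Ob) \<inter> x)"
      by (rule add_right_mono)
    also have "\<dots> = (SUP A \<in> {A. bset A \<subseteq> Ob \<inter> V}. ennreal (\<nu> A) + omu \<nu> ((beta_space - Ob) \<inter> x))"
      unfolding lamb_def by (rule ennreal_SUP_add_left[symmetric]) (use bset_empty in blast)
    also have "\<dots> \<le> lamb \<nu> V"
    proof (rule SUP_least)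
      fix A assume A: "A \<in> {A. bset A \<subseteq> Ob \<inter> V}"
      have opVA: "openin beta_top (V \<inter> bset (- A))" using V openin_bset by auto
      have "(beta_space - Ob) \<inter> x \<subseteq> V \<inter> bset (- A)" using A V bset_Compl by auto
      then have "omu \<nu> ((beta_space - Ob) \<inter> x) \<le> lamb \<nu> (V \<inter> bset (- A))" using omu_le_open[OF opVA] by simp
      then have "ennreal (\<nu> A) + omu \<nu> ((beta_space - Ob) \<inter> x) \<le> ennreal (\<nu> A) + lamb \<nu> (V \<inter> bset (- A))"
        by (rule add_left_mono)
      also have "\<dots> = (SUP B \<in> {B. bset B \<subseteq> V \<inter> bset (- A)}. ennreal (\<nu> A) + ennreal (\<nu> B))"
        unfolding lamb_def by (rule ennreal_SUP_add_right) (use bset_empty in blast)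
      also have "\<dots> \<le> lamb \<nu> V"
      proof (rule SUP_least)
        fix B assume B: "B \<in> {B. bset B \<subseteq> V \<inter> bset (- A)}"
        have "bset A \<inter> bset B = {}" using B bset_Compl by auto
        then have d: "A \<inter> B = {}" by (rule bset_disjD)
        have "ennreal (\<nu> A) + ennreal (\<nu> B) = ennreal (\<nu> (A \<union> B))"
          using fa_add[OF fa d] fa_nonneg[OF fa] by simp
        also have "\<dots> \<le> lamb \<nu> V" unfolding lamb_def using A B by (intro SUP_upper) (auto simp: bset_Un)
        finally show "ennreal (\<nu> A) + ennreal (\<nu> B) \<le> lamb \<nu> V" .
      qed
      finally show "ennreal (\<nu> A) + omu \<nu> ((beta_space - Ob) \<inter> x) \<le> lamb \<nu> V" .
    qed
    finally show "omu \<nu> (Ob \<inter> x) + omu \<nu> ((beta_space - Ob) \<inter> x) \<le> lamb \<nu> V" .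
  qed
qed

lemma omu_measure_space: "measure_space beta_space (borel_sets_of beta_top) (omu \<nu>)"
proof -
  define L where "L = lambda_system beta_space (Pow beta_space) (omu \<nu>)"
  have ms: "measure_space beta_space L (omu \<nu>)"
    unfolding L_def using sigma_algebra.caratheodory_lemma[OF sigma_algebra_Pow omu_outer] .
  then have sL: "sigma_algebra beta_space L" by (simp add: measure_space_def)
  have "Collect (openin beta_top) \<subseteq> L"
  proof
    fix Ob :: "'g set set set" assume "Ob \<in> Collect (openin beta_top)"
    then have op: "openin beta_top Ob" by simp
    then have "Ob \<subseteq> beta_space" by (rule openin_sub_beta)
    then show "Ob \<in> L" unfolding L_def lambda_system_def using open_caratheodory[OF op] by auto
  qed
  then have "sigma_sets beta_space (Collect (openin beta_top)) \<subseteq> L"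
    using sigma_algebra.sigma_sets_subset[OF sL] by blast
  moreover have "sigma_algebra beta_space (borel_sets_of beta_top)"
    unfolding borel_sets_of_def topspace_beta
    by (rule sigma_algebra_sigma_sets) (auto dest: openin_sub_beta)
  ultimately show ?thesis unfolding borel_sets_of_def topspace_beta
    by (intro measure_down[OF ms]) (auto simp: borel_sets_of_def topspace_beta)
qed

lemma lamb_ba_le: "lamb \<nu> (beta_action g ` V) \<le> lamb \<nu> V"
  unfolding lamb_def[of _ "beta_action g ` V"]
proof (rule SUP_least)
  fix A assume A: "A \<in> {A. bset A \<subseteq> beta_action g ` V}"
  have "beta_action (- g) ` bset A \<subseteq> beta_action (- g) ` beta_action g ` V" using A by blast
  also have "beta_action (- g) ` beta_action g ` V = V" by (simp add: image_image ba_inv)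
  finally have "bset (lt (- g) A) \<subseteq> V" by (simp only: ba_bset)
  then have "ennreal (\<nu> (lt (- g) A)) \<le> lamb \<nu> V" unfolding lamb_def by (intro SUP_upper) auto
  moreover have "\<nu> (lt (- g) A) = \<nu> A" unfolding lt_def by (rule fa_inv[OF fa])
  ultimately show "ennreal (\<nu> A) \<le> lamb \<nu> V" by simp
qed

lemma omu_ba_le: "omu \<nu> (beta_action g ` E) \<le> omu \<nu> E"
  unfolding omu_def[of _ E]
proof (rule INF_greatest)
  fix V assume V: "V \<in> {U. openin beta_top U \<and> E \<subseteq> U}"
  have "omu \<nu> (beta_action g ` E) \<le> lamb \<nu> (beta_action g ` V)"
    using V by (intro omu_le_open ba_open) auto
  also have "\<dots> \<le> lamb \<nu> V" by (rule lamb_ba_le)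
  finally show "omu \<nu> (beta_action g ` E) \<le> lamb \<nu> V" .
qed

lemma omu_ba: "omu \<nu> (beta_action g ` E) = omu \<nu> E"
proof (rule antisym)
  show "omu \<nu> (beta_action g ` E) \<le> omu \<nu> E" by (rule omu_ba_le)
  have "E = beta_action (- g) ` beta_action g ` E" by (simp add: image_image ba_inv)
  then have "omu \<nu> E = omu \<nu> (beta_action (- g) ` (beta_action g ` E))" by simp
  also have "\<dots> \<le> omu \<nu> (beta_action g ` E)" by (rule omu_ba_le)
  finally show "omu \<nu> E \<le> omu \<nu> (beta_action g ` E)" .
qed

end

lemma borel_sigma: "sigma_algebra beta_space (borel_sets_of beta_top)"
  unfolding borel_sets_of_def topspace_beta
  by (rule sigma_algebra_sigma_sets) (auto dest: openin_sub_beta)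

lemma open_borel: "openin beta_top U \<Longrightarrow> U \<in> borel_sets_of beta_top"
  unfolding borel_sets_of_def by (auto intro: sigma_sets.Basic)

lemma closed_borel: "closedin beta_top K \<Longrightarrow> K \<in> borel_sets_of beta_top"
proof -
  assume "closedin beta_top K"
  then have K: "K \<subseteq> beta_space" "openin beta_top (beta_space - K)"
    unfolding closedin_def topspace_beta by auto
  then have "beta_space - (beta_space - K) \<in> borel_sets_of beta_top"
    unfolding borel_sets_of_def topspace_beta by (auto intro: sigma_sets.Basic sigma_sets.Compl)
  moreover have "beta_space - (beta_space - K) = K" using K by auto
  ultimately show ?thesis by simp
qed

definition muM :: "('g::group_add set \<Rightarrow> real) \<Rightarrow> 'g set set measure" where
  "muM \<nu> = measure_of beta_space (borel_sets_of beta_top) (omu \<nu>)"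

context
  fixes \<nu> :: "'g::group_add set \<Rightarrow> real"
  assumes fa: "fa_inv_prob \<nu>"
begin

lemma sets_muM: "sets (muM \<nu>) = borel_sets_of beta_top"
  unfolding muM_def using sigma_algebra.sets_measure_of_eq[OF borel_sigma] .

lemma space_muM: "space (muM \<nu>) = beta_space"
  unfolding muM_def by (rule space_measure_of_conv)

lemma emeasure_muM: "E \<in> borel_sets_of beta_top \<Longrightarrow> emeasure (muM \<nu>) E = omu \<nu> E"
  unfolding muM_def using omu_measure_space[OF fa] borel_sigma
  by (intro emeasure_measure_of_sigma) (auto simp: measure_space_def)

lemma muM_radon: "radon_prob beta_top (muM \<nu>)"
  unfolding radon_prob_def
proof (intro conjI ballI allI impI)
  have "emeasure (muM \<nu>) (space (muM \<nu>)) = 1"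
  proof -
    have "space (muM \<nu>) = bset UNIV" by (simp add: space_muM bset_UNIV)
    then show ?thesis using emeasure_muM[OF open_borel[OF openin_bset]] omu_bset[OF fa] fa_univ[OF fa] by simp
  qed
  then show "prob_space (muM \<nu>)" by (rule prob_spaceI)
  show "space (muM \<nu>) = topspace beta_top" by (simp add: space_muM topspace_beta)
  show "sets (muM \<nu>) = borel_sets_of beta_top" by (rule sets_muM)
next
  fix E assume E: "E \<in> sets (muM \<nu>)"
  have "emeasure (muM \<nu>) E = omu \<nu> E" using E sets_muM emeasure_muM by simp
  also have "\<dots> = (INF U \<in> {U. openin beta_top U \<and> E \<subseteq> U}. emeasure (muM \<nu>) U)"
    unfolding omu_def
    by (rule INF_cong) (auto simp: emeasure_muM open_borel omu_open[OF fa])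
  finally show "emeasure (muM \<nu>) E = (INF U \<in> {U. openin beta_top U \<and> E \<subseteq> U}. emeasure (muM \<nu>) U)" .
next
  fix U :: "'g set set set" assume U: "openin beta_top U"
  have eU: "emeasure (muM \<nu>) U = lamb \<nu> U" using emeasure_muM[OF open_borel[OF U]] omu_open[OF fa U] by simp
  show "emeasure (muM \<nu>) U = (SUP K \<in> {K. compactin beta_top K \<and> K \<subseteq> U}. emeasure (muM \<nu>) K)"
  proof (rule antisym)
    show "emeasure (muM \<nu>) U \<le> (SUP K \<in> {K. compactin beta_top K \<and> K \<subseteq> U}. emeasure (muM \<nu>) K)"
      unfolding eU lamb_def
    proof (rule SUP_least)
      fix A assume A: "A \<in> {A. bset A \<subseteq> U}"
      have "ennreal (\<nu> A) = emeasure (muM \<nu>) (bset A)"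
        using emeasure_muM[OF open_borel[OF openin_bset]] omu_bset[OF fa] by simp
      also have "\<dots> \<le> (SUP K \<in> {K. compactin beta_top K \<and> K \<subseteq> U}. emeasure (muM \<nu>) K)"
        using A compactin_bset by (intro SUP_upper) auto
      finally show "ennreal (\<nu> A) \<le> (SUP K \<in> {K. compactin beta_top K \<and> K \<subseteq> U}. emeasure (muM \<nu>) K)" .
    qed
    show "(SUP K \<in> {K. compactin beta_top K \<and> K \<subseteq> U}. emeasure (muM \<nu>) K) \<le> emeasure (muM \<nu>) U"
    proof (rule SUP_least)
      fix K assume K: "K \<in> {K. compactin beta_top K \<and> K \<subseteq> U}"
      then have "closedin beta_top K" using compactin_imp_closedin[OF hausdorff_beta] by blast
      then have "K \<in> sets (muM \<nu>)" using closed_borel sets_muM by simp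
      moreover have "U \<in> sets (muM \<nu>)" using open_borel[OF U] sets_muM by simp
      ultimately show "emeasure (muM \<nu>) K \<le> emeasure (muM \<nu>) U" using K by (intro emeasure_mono) auto
    qed
  qed
qed

lemma muM_inv: "action_invariant beta_action (muM \<nu>)"
  unfolding action_invariant_def
proof (intro allI impI)
  fix g E assume E: "E \<in> sets (muM \<nu>)"
  then have E': "E \<in> borel_sets_of beta_top" using sets_muM by simp
  have "emeasure (muM \<nu>) (beta_action g ` E) = omu \<nu> (beta_action g ` E)"
    using emeasure_muM[OF ba_borel[OF E']] .
  also have "\<dots> = omu \<nu> E" by (rule omu_ba[OF fa])
  also have "\<dots> = emeasure (muM \<nu>) E" using emeasure_muM[OF E'] by simp
  finally show "emeasure (muM \<nu>) (beta_action g ` E) = emeasure (muM \<nu>) E" .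
qed

lemma measure_muM_bset: "measure (muM \<nu>) (bset A) = \<nu> A"
proof -
  have "emeasure (muM \<nu>) (bset A) = ennreal (\<nu> A)"
    using emeasure_muM[OF open_borel[OF openin_bset]] omu_bset[OF fa] by simp
  then show ?thesis using fa_nonneg[OF fa] by (simp add: measure_def)
qed

end


theorem theoremt:
  assumes "countable (UNIV :: 'g::group_add set)"
    and "amenable TYPE('g)"
  shows "dynamical_comparison (beta_top :: 'g set set topology) beta_action \<and>
    (\<forall>A B :: 'g set. (\<forall>\<mu>. fa_inv_prob \<mu> \<longrightarrow> \<mu> A < \<mu> B) \<longrightarrow>
       (\<exists>(n::nat) (P::nat \<Rightarrow> 'g set) (\<gamma>::nat \<Rightarrow> 'g).
          A = (\<Union>i<n. P i) \<and>
          (\<forall>i<n. \<forall>j<n. i \<noteq> j \<longrightarrow> P i \<inter> P j = {}) \<and>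
          (\<forall>i<n. (\<lambda>x. \<gamma> i + x) ` P i \<subseteq> B) \<and>
          (\<forall>i<n. \<forall>j<n. i \<noteq> j \<longrightarrow> (\<lambda>x. \<gamma> i + x) ` P i \<inter> (\<lambda>x. \<gamma> j + x) ` P j = {})))"
proof (rule conjI)
  show "\<forall>A B :: 'g set. (\<forall>\<mu>. fa_inv_prob \<mu> \<longrightarrow> \<mu> A < \<mu> B) \<longrightarrow>
       (\<exists>(n::nat) (P::nat \<Rightarrow> 'g set) (\<gamma>::nat \<Rightarrow> 'g).
          A = (\<Union>i<n. P i) \<and>
          (\<forall>i<n. \<forall>j<n. i \<noteq> j \<longrightarrow> P i \<inter> P j = {}) \<and>
          (\<forall>i<n. (\<lambda>x. \<gamma> i + x) ` P i \<subseteq> B) \<and>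
          (\<forall>i<n. \<forall>j<n. i \<noteq> j \<longrightarrow> (\<lambda>x. \<gamma> i + x) ` P i \<inter> (\<lambda>x. \<gamma> j + x) ` P j = {}))"
  proof (intro allI impI)
    fix A B :: "'g set" assume "\<forall>\<mu>. fa_inv_prob \<mu> \<longrightarrow> \<mu> A < \<mu> B"
    from comparison_sets[OF assms this] show "\<exists>(n::nat) (P::nat \<Rightarrow> 'g set) (\<gamma>::nat \<Rightarrow> 'g).
          A = (\<Union>i<n. P i) \<and>
          (\<forall>i<n. \<forall>j<n. i \<noteq> j \<longrightarrow> P i \<inter> P j = {}) \<and>
          (\<forall>i<n. (\<lambda>x. \<gamma> i + x) ` P i \<subseteq> B) \<and>
          (\<forall>i<n. \<forall>j<n. i \<noteq> j \<longrightarrow> (\<lambda>x. \<gamma> i + x) ` P i \<inter> (\<lambda>x. \<gamma> j + x) ` P j = {})" .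
  qed
next
  show "dynamical_comparison (beta_top :: 'g set set topology) beta_action"
    unfolding dynamical_comparison_def
  proof (intro allI impI)
    fix A' B' :: "'g set set set"
    assume h: "clopenin beta_top A' \<and> clopenin beta_top B' \<and> A' \<noteq> {} \<and> B' \<noteq> {} \<and>
        (\<forall>\<mu>. radon_prob beta_top \<mu> \<and> action_invariant beta_action \<mu> \<longrightarrow> measure \<mu> A' < measure \<mu> B')"
    have cA: "clopenin beta_top A'" and cB: "clopenin beta_top B'" using h by auto
    obtain A where A: "A' = bset A" using clopen_is_bset[OF cA] by blast
    obtain B where B: "B' = bset B" using clopen_is_bset[OF cB] by blast
    have hyp: "\<forall>\<nu>. fa_inv_prob \<nu> \<longrightarrow> \<nu> A < \<nu> B"
    proof (intro allI impI)
      fix \<nu> :: "'g set \<Rightarrow> real" assume fa: "fa_inv_prob \<nu>"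
      have "\<forall>\<mu>. radon_prob beta_top \<mu> \<and> action_invariant beta_action \<mu> \<longrightarrow> measure \<mu> A' < measure \<mu> B'"
        using h by blast
      then have "measure (muM \<nu>) A' < measure (muM \<nu>) B'" using muM_radon[OF fa] muM_inv[OF fa] by blast
      then show "\<nu> A < \<nu> B" using A B measure_muM_bset[OF fa] by simp
    qed
    obtain n :: nat and P :: "nat \<Rightarrow> 'g set" and \<gamma> :: "nat \<Rightarrow> 'g" where c: "A = (\<Union>i<n. P i)"
          "\<forall>i<n. \<forall>j<n. i \<noteq> j \<longrightarrow> P i \<inter> P j = {}"
          "\<forall>i<n. (\<lambda>x. \<gamma> i + x) ` P i \<subseteq> B"
          "\<forall>i<n. \<forall>j<n. i \<noteq> j \<longrightarrow> (\<lambda>x. \<gamma> i + x) ` P i \<inter> (\<lambda>x. \<gamma> j + x) ` P j = {}"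
      using comparison_sets[OF assms hyp] by (elim exE conjE) (rule that; assumption)
    define P' where "P' i = bset (P i)" for i
    have img: "beta_action (\<gamma> i) ` P' i = bset ((\<lambda>x. \<gamma> i + x) ` P i)" for i
      unfolding P'_def ba_bset lt_def ..
    have d1: "A' = (\<Union>i<n. P' i)" unfolding A c(1) P'_def using bset_UN[OF finite_lessThan[of n], of P] .
    have d2: "\<forall>i<n. clopenin beta_top (P' i)" unfolding P'_def using clopenin_bset by blast
    have d3: "\<forall>i<n. \<forall>j<n. i \<noteq> j \<longrightarrow> P' i \<inter> P' j = {}"
    proof (intro allI impI)
      fix i j assume "i < n" "j < n" "i \<noteq> j"
      then have "P i \<inter> P j = {}" using c(2) by blast
      then show "P' i \<inter> P' j = {}" unfolding P'_def bset_Int[symmetric] by (simp add: bset_empty)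
    qed
    have d4: "\<forall>i<n. beta_action (\<gamma> i) ` P' i \<subseteq> B'"
    proof (intro allI impI)
      fix i assume "i < n"
      then have "(\<lambda>x. \<gamma> i + x) ` P i \<subseteq> B" using c(3) by blast
      then show "beta_action (\<gamma> i) ` P' i \<subseteq> B'" unfolding img B by (rule bset_mono)
    qed
    have d5: "\<forall>i<n. \<forall>j<n. i \<noteq> j \<longrightarrow> beta_action (\<gamma> i) ` P' i \<inter> beta_action (\<gamma> j) ` P' j = {}"
    proof (intro allI impI)
      fix i j assume "i < n" "j < n" "i \<noteq> j"
      then have "(\<lambda>x. \<gamma> i + x) ` P i \<inter> (\<lambda>x. \<gamma> j + x) ` P j = {}" using c(4) by blast
      then show "beta_action (\<gamma> i) ` P' i \<inter> beta_action (\<gamma> j) ` P' j = {}"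
        unfolding img bset_Int[symmetric] by (simp add: bset_empty)
    qed
    show "\<exists>(n::nat) (P::nat \<Rightarrow> 'g set set set) (\<gamma>::nat \<Rightarrow> 'g).
            A' = (\<Union>i<n. P i) \<and>
            (\<forall>i<n. clopenin beta_top (P i)) \<and>
            (\<forall>i<n. \<forall>j<n. i \<noteq> j \<longrightarrow> P i \<inter> P j = {}) \<and>
            (\<forall>i<n. beta_action (\<gamma> i) ` P i \<subseteq> B') \<and>
            (\<forall>i<n. \<forall>j<n. i \<noteq> j \<longrightarrow> beta_action (\<gamma> i) ` P i \<inter> beta_action (\<gamma> j) ` P j = {})"
      by (rule exI[of _ n], rule exI[of _ P'], rule exI[of _ \<gamma>]) (intro conjI d1 d2 d3 d4 d5)
  qed
qed


end
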